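(* Consider the deep linear network setting below, trained by gradient descent with Polyak's momentum with step size $\eta$ and momentum parameter $\beta$. Let $\xi_t:=\mathrm{vec}(U_t-Y)\in\mathbb{R}^{d_yn}$, let $M_{t,l}:=\sum_{s=0}^t\beta^{t-s}\frac{\partial\ell}{\partial W^{(l)}}(W_s)$, and define $$H_t:=\frac{1}{m^{L-1}d_y}\sum_{l=1}^L\Big[(W^{(l-1:1)}_tX)^\top(W^{(l-1:1)}_tX)\otimes W^{(L:l+1)}_t(W^{(L:l+1)}_t)^\top\Big]\in\mathbb{R}^{d_yn\times d_yn},$$ $$\Phi_t:=\prod_{l}(W^{(l)}_t-\eta M_{t,l})-W^{(L:1)}_t+\eta\sum_{l=1}^LW^{(L:l+1)}_tM_{t,l}W^{(l-1:1)}_t,\qquad\phi_t:=\tfrac{1}{\sqrt{m^{L-1}d_y}}\mathrm{vec}(\Phi_tX),$$ $$\psi_t:=\tfrac{1}{\sqrt{m^{L-1}d_y}}\mathrm{vec}\Big((L-1)\beta W^{(L:1)}_tX+\beta W^{(L:1)}_{t-1}X-\beta\sum_{l=1}^LW^{(L:l+1)}_tW^{(l)}_{t-1}W^{(l-1:1)}_tX\Big),\qquad \iota_t:=\eta(H_0-H_t)\xi_t,$$ where $\prod_l(W^{(l)}_t-\eta M_{t,l})$ denotes the ordered product $(W^{(L)}_t-\eta M_{t,L})\cdots(W^{(1)}_t-\eta M_{t,1})$. Then $H_t$ is positive semidefinite and for every $t\ge0$, $$\begin{bmatrix}\xi_{t+1}\\ \xi_t\end{bmatrix}=\begin{bmatrix}(1+\beta)I_{d_yn}-\eta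 H_0&-\beta I_{d_yn}\\ I_{d_yn}&0\end{bmatrix}\begin{bmatrix}\xi_t\\ \xi_{t-1}\end{bmatrix}+\begin{bmatrix}\phi_t+\psi_t+\iota_t\\0\end{bmatrix}.$$
   Context: Deep linear network: $\mathcal N_W(x)=\frac{1}{\sqrt{m^{L-1}d_y}}W^{(L)}W^{(L-1)}\cdots W^{(1)}x$ with $W^{(l)}\in\mathbb{R}^{d_l\times d_{l-1}}$, $d_0=d$, $d_L=d_y$, $d_l=m$ otherwise. $W^{(j:i)}:=W^{(j)}W^{(j-1)}\cdots W^{(i)}$ for $i\le j$ and $W^{(i-1:i)}:=I$ (identity of appropriate size). Data matrix $X=[x_1,\dots,x_n]\in\mathbb{R}^{d\times n}$, labels $Y\in\mathbb{R}^{d_y\times n}$, output $U:=\frac{1}{\sqrt{m^{L-1}d_y}}W^{(L:1)}X$, loss $\ell(W)=\frac12\|U-Y\|_F^2$. Gradient descent with Polyak's momentum: $W^{(l)}_{-1}:=W^{(l)}_0$, $W^{(l)}_{t+1}=W^{(l)}_t-\eta\frac{\partial\ell}{\partial W^{(l)}}(W_t)+\beta(W^{(l)}_t-W^{(l)}_{t-1})$ for every layer $l$ (equivalently $W^{(l)}_{t+1}=W^{(l)}_t-\eta M_{t,l}$). $U_t$ is the output at iterate $W_t$. $\mathrm{vec}$ is column-major vectorization, $\otimes$ the Kronecker product. *)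

theory Defs
  imports Complex_Main "Jordan_Normal_Form.Matrix"
begin

definition ldim :: "nat \<Rightarrow> nat \<Rightarrow> nat \<Rightarrow> nat \<Rightarrow> nat \<Rightarrow> nat" where
  "ldim d m dy L l = (if l = 0 then d else if l = L then dy else m)"

text \<open>Ordered product W^(j:i) = A j * ... * A i, with W^(i-1:i) = identity of size d_(i-1).
  Called as lprod dm A i j.\<close>
fun lprod :: "(nat \<Rightarrow> nat) \<Rightarrow> (nat \<Rightarrow> real mat) \<Rightarrow> nat \<Rightarrow> nat \<Rightarrow> real mat" where
  "lprod dm A i 0 = 1\<^sub>m (dm 0)"
| "lprod dm A i (Suc j) = (if Suc j < i then 1\<^sub>m (dm (Suc j)) else A (Suc j) * lprod dm A i j)"

definition msum :: "nat \<Rightarrow> nat \<Rightarrow> (nat \<Rightarrow> real mat) \<Rightarrow> nat list \<Rightarrow> real mat" where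
  "msum r c f xs = foldr (\<lambda>i acc. f i + acc) xs (0\<^sub>m r c)"

definition vecc :: "real mat \<Rightarrow> real vec" where
  "vecc A = vec (dim_row A * dim_col A) (\<lambda>k. A $$ (k mod dim_row A, k div dim_row A))"

definition kron :: "real mat \<Rightarrow> real mat \<Rightarrow> real mat" where
  "kron A B = mat (dim_row A * dim_row B) (dim_col A * dim_col B)
     (\<lambda>(i, j). A $$ (i div dim_row B, j div dim_col B) * B $$ (i mod dim_row B, j mod dim_col B))"

definition psd :: "real mat \<Rightarrow> bool" where
  "psd A \<longleftrightarrow> dim_row A = dim_col A \<and> transpose_mat A = A \<and>
     (\<forall>v \<in> carrier_vec (dim_row A). v \<bullet> (A *\<^sub>v v) \<ge> 0)"

definition nrm :: "nat \<Rightarrow> nat \<Rightarrow> nat \<Rightarrow> real" where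
  "nrm m dy L = sqrt (real m ^ (L - 1) * real dy)"

definition outp :: "nat \<Rightarrow> nat \<Rightarrow> nat \<Rightarrow> nat \<Rightarrow> real mat \<Rightarrow> (nat \<Rightarrow> real mat) \<Rightarrow> real mat" where
  "outp d m dy L X Wl = (1 / nrm m dy L) \<cdot>\<^sub>m (lprod (ldim d m dy L) Wl 1 L * X)"

text \<open>Gradient of the loss 1/2 ||U - Y||_F^2 with respect to layer l:
  (1/sqrt(m^(L-1) dy)) (W^(L:l+1))^T (U - Y) (W^(l-1:1) X)^T.\<close>
definition grad :: "nat \<Rightarrow> nat \<Rightarrow> nat \<Rightarrow> nat \<Rightarrow> real mat \<Rightarrow> real mat \<Rightarrow> (nat \<Rightarrow> real mat) \<Rightarrow> nat \<Rightarrow> real mat" where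
  "grad d m dy L X Y Wl l =
     (1 / nrm m dy L) \<cdot>\<^sub>m (transpose_mat (lprod (ldim d m dy L) Wl (l + 1) L) * (outp d m dy L X Wl - Y)
        * transpose_mat (lprod (ldim d m dy L) Wl 1 (l - 1) * X))"

definition mom :: "nat \<Rightarrow> nat \<Rightarrow> nat \<Rightarrow> nat \<Rightarrow> real mat \<Rightarrow> real mat \<Rightarrow> real \<Rightarrow> (nat \<Rightarrow> nat \<Rightarrow> real mat) \<Rightarrow> nat \<Rightarrow> nat \<Rightarrow> real mat" where
  "mom d m dy L X Y \<beta> W t l =
     msum (ldim d m dy L l) (ldim d m dy L (l - 1)) (\<lambda>s. (\<beta> ^ (t - s)) \<cdot>\<^sub>m grad d m dy L X Y (W s) l) [0..<Suc t]"

definition Hmat :: "nat \<Rightarrow> nat \<Rightarrow> nat \<Rightarrow> nat \<Rightarrow> real mat \<Rightarrow> (nat \<Rightarrow> real mat) \<Rightarrow> real mat" where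
  "Hmat d m dy L X Wl =
     (1 / (real m ^ (L - 1) * real dy)) \<cdot>\<^sub>m
       msum (dy * dim_col X) (dy * dim_col X)
         (\<lambda>l. kron (transpose_mat (lprod (ldim d m dy L) Wl 1 (l - 1) * X) * (lprod (ldim d m dy L) Wl 1 (l - 1) * X))
                    (lprod (ldim d m dy L) Wl (l + 1) L * transpose_mat (lprod (ldim d m dy L) Wl (l + 1) L)))
         [1..<Suc L]"

text \<open>Gradient descent with Polyak's momentum, W_(-1) = W_0 (encoded by nat subtraction t - 1).\<close>
definition polyak_seq :: "nat \<Rightarrow> nat \<Rightarrow> nat \<Rightarrow> nat \<Rightarrow> real mat \<Rightarrow> real mat \<Rightarrow> real \<Rightarrow> real \<Rightarrow> (nat \<Rightarrow> nat \<Rightarrow> real mat) \<Rightarrow> bool" where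
  "polyak_seq d m dy L X Y \<eta> \<beta> W \<longleftrightarrow>
     (\<forall>t l. 1 \<le> l \<and> l \<le> L \<longrightarrow>
        W (Suc t) l = W t l - \<eta> \<cdot>\<^sub>m grad d m dy L X Y (W t) l + \<beta> \<cdot>\<^sub>m (W t l - W (t - 1) l))"

definition xi :: "nat \<Rightarrow> nat \<Rightarrow> nat \<Rightarrow> nat \<Rightarrow> real mat \<Rightarrow> real mat \<Rightarrow> (nat \<Rightarrow> nat \<Rightarrow> real mat) \<Rightarrow> nat \<Rightarrow> real vec" where
  "xi d m dy L X Y W t = vecc (outp d m dy L X (W t) - Y)"

definition Phi :: "nat \<Rightarrow> nat \<Rightarrow> nat \<Rightarrow> nat \<Rightarrow> real mat \<Rightarrow> real mat \<Rightarrow> real \<Rightarrow> real \<Rightarrow> (nat \<Rightarrow> nat \<Rightarrow> real mat) \<Rightarrow> nat \<Rightarrow> real mat" where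
  "Phi d m dy L X Y \<eta> \<beta> W t =
     lprod (ldim d m dy L) (\<lambda>l. W t l - \<eta> \<cdot>\<^sub>m mom d m dy L X Y \<beta> W t l) 1 L
     - lprod (ldim d m dy L) (W t) 1 L
     + \<eta> \<cdot>\<^sub>m msum dy d (\<lambda>l. lprod (ldim d m dy L) (W t) (l + 1) L * mom d m dy L X Y \<beta> W t l
                              * lprod (ldim d m dy L) (W t) 1 (l - 1)) [1..<Suc L]"

definition phi :: "nat \<Rightarrow> nat \<Rightarrow> nat \<Rightarrow> nat \<Rightarrow> real mat \<Rightarrow> real mat \<Rightarrow> real \<Rightarrow> real \<Rightarrow> (nat \<Rightarrow> nat \<Rightarrow> real mat) \<Rightarrow> nat \<Rightarrow> real vec" where
  "phi d m dy L X Y \<eta> \<beta> W t = vecc ((1 / nrm m dy L) \<cdot>\<^sub>m (Phi d m dy L X Y \<eta> \<beta> W t * X))"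

definition psi :: "nat \<Rightarrow> nat \<Rightarrow> nat \<Rightarrow> nat \<Rightarrow> real mat \<Rightarrow> real \<Rightarrow> (nat \<Rightarrow> nat \<Rightarrow> real mat) \<Rightarrow> nat \<Rightarrow> real vec" where
  "psi d m dy L X \<beta> W t = vecc ((1 / nrm m dy L) \<cdot>\<^sub>m
     ((real (L - 1) * \<beta>) \<cdot>\<^sub>m (lprod (ldim d m dy L) (W t) 1 L * X)
      + \<beta> \<cdot>\<^sub>m (lprod (ldim d m dy L) (W (t - 1)) 1 L * X)
      - \<beta> \<cdot>\<^sub>m msum dy (dim_col X)
           (\<lambda>l. lprod (ldim d m dy L) (W t) (l + 1) L * W (t - 1) l * lprod (ldim d m dy L) (W t) 1 (l - 1) * X)
           [1..<Suc L]))"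

definition iota :: "nat \<Rightarrow> nat \<Rightarrow> nat \<Rightarrow> nat \<Rightarrow> real mat \<Rightarrow> real mat \<Rightarrow> real \<Rightarrow> (nat \<Rightarrow> nat \<Rightarrow> real mat) \<Rightarrow> nat \<Rightarrow> real vec" where
  "iota d m dy L X Y \<eta> W t =
     \<eta> \<cdot>\<^sub>v ((Hmat d m dy L X (W 0) - Hmat d m dy L X (W t)) *\<^sub>v xi d m dy L X Y W t)"

end

theory Submission
  imports Defs
begin


lemma lprod_carrier:
  assumes "\<And>k. i \<le> k \<Longrightarrow> k \<le> j \<Longrightarrow> A k \<in> carrier_mat (dm k) (dm (k - 1))"
    and "i \<le> Suc j"
  shows "lprod dm A i j \<in> carrier_mat (dm j) (dm (i - 1))"
  using assms
proof (induction j)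
  case 0
  then show ?case by (cases i) auto
next
  case (Suc j)
  show ?case
  proof (cases "Suc j < i")
    case True
    then have "i = Suc (Suc j)" using Suc.prems by simp
    then show ?thesis using True by simp
  next
    case False
    have "lprod dm A i j \<in> carrier_mat (dm j) (dm (i - 1))"
      using Suc.IH Suc.prems False by simp
    moreover have "A (Suc j) \<in> carrier_mat (dm (Suc j)) (dm j)" using Suc.prems(1)[of "Suc j"] Suc.prems(2) False by simp
    ultimately show ?thesis using False by simp
  qed
qed

lemma lprod_cong:
  assumes "\<And>k. i \<le> k \<Longrightarrow> k \<le> j \<Longrightarrow> A k = B k"
  shows "lprod dm A i j = lprod dm B i j"
  using assms by (induction j) auto

lemma lprod_split:
  assumes "\<And>k. i \<le> k \<Longrightarrow> k \<le> j \<Longrightarrow> A k \<in> carrier_mat (dm k) (dm (k - 1))"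
    and "i \<le> Suc l" and "l \<le> j"
  shows "lprod dm A (Suc l) j * lprod dm A i l = lprod dm A i j"
  using assms
proof (induction j)
  case 0
  then have l: "l = 0" by simp
  have "lprod dm A i 0 \<in> carrier_mat (dm 0) (dm (i - 1))" using lprod_carrier[of i 0 A dm] 0 by simp
  then show ?case using l by simp
next
  case (Suc j)
  show ?case
  proof (cases "l = Suc j")
    case True
    have "lprod dm A i l \<in> carrier_mat (dm l) (dm (i - 1))" 
      using lprod_carrier[of i l A dm] Suc.prems by simp
    then show ?thesis using True by simp
  next
    case False
    then have lj: "l \<le> j" using Suc.prems by simp
    have IH: "lprod dm A (Suc l) j * lprod dm A i l = lprod dm A i j"
      using Suc.IH Suc.prems lj by simp
    have c1: "lprod dm A (Suc l) j \<in> carrier_mat (dm j) (dm l)"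
      using lprod_carrier[of "Suc l" j A dm] Suc.prems lj by simp
    have c2: "lprod dm A i l \<in> carrier_mat (dm l) (dm (i - 1))"
      using lprod_carrier[of i l A dm] Suc.prems lj by simp
    have c0: "A (Suc j) \<in> carrier_mat (dm (Suc j)) (dm j)" using Suc.prems(1)[of "Suc j"] Suc.prems(2) lj by simp
    have "lprod dm A (Suc l) (Suc j) * lprod dm A i l = A (Suc j) * lprod dm A (Suc l) j * lprod dm A i l"
      using lj by simp
    also have "\<dots> = A (Suc j) * (lprod dm A (Suc l) j * lprod dm A i l)"
      using c0 c1 c2 by (simp add: assoc_mult_mat)
    also have "\<dots> = lprod dm A i (Suc j)" using IH Suc.prems(2) lj by simp
    finally show ?thesis .
  qed
qed

lemma lprod_split3:
  assumes "\<And>k. i \<le> k \<Longrightarrow> k \<le> j \<Longrightarrow> A k \<in> carrier_mat (dm k) (dm (k - 1))"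
    and "i \<le> l" and "l \<le> j" and "1 \<le> l"
  shows "lprod dm A (l + 1) j * A l * lprod dm A i (l - 1) = lprod dm A i j"
proof -
  obtain l' where l': "l = Suc l'" using assms(4) by (cases l) auto
  have c1: "lprod dm A (Suc l) j \<in> carrier_mat (dm j) (dm l)"
    using lprod_carrier[of "Suc l" j A dm] assms by simp
  have c2: "lprod dm A i l' \<in> carrier_mat (dm l') (dm (i - 1))"
    using lprod_carrier[of i l' A dm] assms l' by simp
  have c0: "A l \<in> carrier_mat (dm l) (dm l')" using assms(1)[of l] assms(2,3) l' by simp
  have "lprod dm A i l = A l * lprod dm A i l'" using l' assms by simp
  then have "lprod dm A (l + 1) j * A l * lprod dm A i (l - 1) = lprod dm A (Suc l) j * lprod dm A i l"
    using c0 c1 c2 l' by (simp add: assoc_mult_mat)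
  also have "\<dots> = lprod dm A i j" using lprod_split[of i j A dm l, OF assms(1)] assms(2,3) by simp
  finally show ?thesis .
qed

lemma msum_carrier:
  "(\<And>i. i \<in> set xs \<Longrightarrow> f i \<in> carrier_mat r c) \<Longrightarrow> msum r c f xs \<in> carrier_mat r c"
  by (induction xs) (auto simp: msum_def)

lemma msum_index:
  "(\<And>i. i \<in> set xs \<Longrightarrow> f i \<in> carrier_mat r c) \<Longrightarrow> p < r \<Longrightarrow> q < c \<Longrightarrow>
   msum r c f xs $$ (p, q) = (\<Sum>i\<leftarrow>xs. f i $$ (p, q))"
proof (induction xs)
  case Nil then show ?case by (simp add: msum_def)
next
  case (Cons a xs)
  have "msum r c f xs \<in> carrier_mat r c" using Cons.prems by (intro msum_carrier) auto
  then show ?case using Cons by (simp add: msum_def)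
qed

lemma msum_mult:
  "(\<And>i. i \<in> set xs \<Longrightarrow> f i \<in> carrier_mat r c) \<Longrightarrow> X \<in> carrier_mat c c' \<Longrightarrow>
   msum r c f xs * X = msum r c' (\<lambda>i. f i * X) xs"
proof (induction xs)
  case Nil then show ?case by (simp add: msum_def)
next
  case (Cons a xs)
  have "msum r c f xs \<in> carrier_mat r c" using Cons.prems by (intro msum_carrier) auto
  moreover have "f a \<in> carrier_mat r c" using Cons.prems by simp
  ultimately show ?case using Cons by (simp add: msum_def add_mult_distrib_mat[of _ r c])
qed

lemma msum_smult:
  "(\<And>i. i \<in> set xs \<Longrightarrow> f i \<in> carrier_mat r c) \<Longrightarrow>
   a \<cdot>\<^sub>m msum r c f xs = msum r c (\<lambda>i. a \<cdot>\<^sub>m f i) xs"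
proof (induction xs)
  case Nil then show ?case by (simp add: msum_def)
next
  case (Cons x xs)
  have "msum r c f xs \<in> carrier_mat r c" using Cons.prems by (intro msum_carrier) auto
  moreover have "f x \<in> carrier_mat r c" using Cons.prems by simp
  ultimately show ?case using Cons by (simp add: msum_def add_smult_distrib_left_mat[of _ r c])
qed

lemma msum_cong:
  "(\<And>i. i \<in> set xs \<Longrightarrow> f i = g i) \<Longrightarrow> msum r c f xs = msum r c g xs"
  by (induction xs) (auto simp: msum_def)

lemma dim_vecc[simp]: "dim_vec (vecc M) = dim_row M * dim_col M"
  by (simp add: vecc_def)

lemma vecc_carrier: "M \<in> carrier_mat r c \<Longrightarrow> vecc M \<in> carrier_vec (r * c)"
  unfolding carrier_vec_def carrier_mat_def by simp

lemma vecc_index: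
  assumes "M \<in> carrier_mat r c" "i < r * c"
  shows "vecc M $ i = M $$ (i mod r, i div r)"
proof -
  have d: "dim_row M = r" "dim_col M = c" using assms(1) by auto
  show ?thesis unfolding vecc_def d index_vec[OF assms(2)] by (rule refl)
qed

lemma sum_reindex_divmod:
  "(\<Sum>j\<in>{0..<r * c}. f (j mod r) (j div r)) = (\<Sum>q\<in>{0..<c}. \<Sum>p\<in>{0..<r}. f p (q::nat))"
proof (induction c)
  case 0 then show ?case by simp
next
  case (Suc c)
  have e: "{0..<r * Suc c} = {0..<r * c} \<union> {r * c..<r * c + r}" by auto
  have "(\<Sum>j\<in>{0..<r * Suc c}. f (j mod r) (j div r)) =
     (\<Sum>j\<in>{0..<r * c}. f (j mod r) (j div r)) + (\<Sum>j\<in>{r * c..<r * c + r}. f (j mod r) (j div r))"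
    unfolding e by (rule sum.union_disjoint) auto
  also have "(\<Sum>j\<in>{r * c..<r * c + r}. f (j mod r) (j div r)) = (\<Sum>p\<in>{0..<r}. f p c)"
  proof -
    have "(\<Sum>j\<in>{r * c..<r * c + r}. f (j mod r) (j div r)) = (\<Sum>p\<in>{0..<r}. f ((p + r * c) mod r) ((p + r * c) div r))"
      using sum.shift_bounds_nat_ivl[of "\<lambda>j. f (j mod r) (j div r)" 0 "r * c" r] by (simp add: add.commute)
    also have "\<dots> = (\<Sum>p\<in>{0..<r}. f p c)"
    proof (rule sum.cong)
      fix p assume "p \<in> {0..<r}"
      then have "p < r" by simp
      then have "(p + r * c) mod r = p" "(p + r * c) div r = c" by auto
      then show "f ((p + r * c) mod r) ((p + r * c) div r) = f p c" by simp
    qed simp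
    finally show ?thesis .
  qed
  also have "(\<Sum>j\<in>{0..<r * c}. f (j mod r) (j div r)) = (\<Sum>q\<in>{0..<c}. \<Sum>p\<in>{0..<r}. f p q)"
    by (rule Suc.IH)
  finally show ?case by (simp only: sum.atLeast0_lessThan_Suc)
qed


lemma vecc_add:
  assumes "M \<in> carrier_mat r c" "N \<in> carrier_mat r c"
  shows "vecc (M + N) = vecc M + vecc N"
proof (rule eq_vecI)
  have MN: "M + N \<in> carrier_mat r c" using assms by simp
  show "dim_vec (vecc (M + N)) = dim_vec (vecc M + vecc N)" using assms MN
    by (metis carrier_matD dim_vecc index_add_vec(2))
  fix i assume "i < dim_vec (vecc M + vecc N)"
  then have i: "i < r * c" using carrier_matD[OF assms(2)] by simp
  then have "0 < r" by (cases r) auto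
  then have ii: "i mod r < r" "i div r < c" using i by (auto simp: less_mult_imp_div_less mult.commute)
  have "vecc (M + N) $ i = (M + N) $$ (i mod r, i div r)" by (rule vecc_index[OF MN i])
  also have "\<dots> = M $$ (i mod r, i div r) + N $$ (i mod r, i div r)" using assms ii by simp
  also have "\<dots> = vecc M $ i + vecc N $ i" using vecc_index[OF assms(1) i] vecc_index[OF assms(2) i] by simp
  also have "\<dots> = (vecc M + vecc N) $ i" using carrier_matD[OF assms(2)] i by simp
  finally show "vecc (M + N) $ i = (vecc M + vecc N) $ i" .
qed

lemma vecc_zero: "vecc (0\<^sub>m r c) = 0\<^sub>v (r * c)"
proof (rule eq_vecI)
  show "dim_vec (vecc (0\<^sub>m r c)) = dim_vec (0\<^sub>v (r * c))" by simp
  fix i assume "i < dim_vec (0\<^sub>v (r * c))"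
  then have i: "i < r * c" by simp
  then have "0 < r" by (cases r) auto
  then have ii: "i mod r < r" "i div r < c" using i by (auto simp: less_mult_imp_div_less mult.commute)
  show "vecc (0\<^sub>m r c) $ i = 0\<^sub>v (r * c) $ i"
    using vecc_index[OF zero_carrier_mat i] ii i by simp
qed

lemma kron_mult_vecc:
  assumes P: "P \<in> carrier_mat n n'" and Q: "Q \<in> carrier_mat r r'" and E: "E \<in> carrier_mat r' n'"
  shows "kron P Q *\<^sub>v vecc E = vecc (Q * E * transpose_mat P)"
proof (rule eq_vecI)
  have dK: "dim_row (kron P Q) = n * r" "dim_col (kron P Q) = n' * r'" using P Q by (simp_all add: kron_def)
  have QEP: "Q * E * transpose_mat P \<in> carrier_mat r n" using P Q E by auto
  show "dim_vec (kron P Q *\<^sub>v vecc E) = dim_vec (vecc (Q * E * transpose_mat P))"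
    using dK QEP by (metis carrier_matD dim_mult_mat_vec dim_vecc mult.commute)
  fix i assume "i < dim_vec (vecc (Q * E * transpose_mat P))"
  then have i: "i < r * n" using carrier_matD[OF P] carrier_matD[OF Q] by simp
  then have "0 < r" by (cases r) auto
  then have ii: "i mod r < r" "i div r < n" using i by (auto simp: less_mult_imp_div_less mult.commute)
  have vE: "vecc E \<in> carrier_vec (r' * n')" by (rule vecc_carrier[OF E])
  have "(kron P Q *\<^sub>v vecc E) $ i = row (kron P Q) i \<bullet> vecc E"
    using dK i by (simp add: mult.commute)
  also have "\<dots> = (\<Sum>j\<in>{0..<r' * n'}. row (kron P Q) i $ j * vecc E $ j)"
    using carrier_matD[OF E] by (simp add: scalar_prod_def)
  also have "\<dots> = (\<Sum>j\<in>{0..<r' * n'}. P $$ (i div r, j div r') * Q $$ (i mod r, j mod r') * E $$ (j mod r', j div r'))"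
  proof (rule sum.cong)
    fix j assume "j \<in> {0..<r' * n'}"
    then have j: "j < r' * n'" by simp
    have "row (kron P Q) i $ j = kron P Q $$ (i, j)" using dK i j by (simp add: mult.commute)
    also have "\<dots> = P $$ (i div r, j div r') * Q $$ (i mod r, j mod r')"
      using P Q i j unfolding kron_def by (simp add: mult.commute)
    finally show "row (kron P Q) i $ j * vecc E $ j = P $$ (i div r, j div r') * Q $$ (i mod r, j mod r') * E $$ (j mod r', j div r')"
      using vecc_index[OF E j] by simp
  qed simp
  also have "\<dots> = (\<Sum>q\<in>{0..<n'}. \<Sum>p\<in>{0..<r'}. P $$ (i div r, q) * Q $$ (i mod r, p) * E $$ (p, q))"
    by (rule sum_reindex_divmod[where f="\<lambda>p q. P $$ (i div r, q) * Q $$ (i mod r, p) * E $$ (p, q)"])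
  also have "\<dots> = (\<Sum>q\<in>{0..<n'}. (\<Sum>p\<in>{0..<r'}. Q $$ (i mod r, p) * E $$ (p, q)) * P $$ (i div r, q))"
    by (simp add: sum_distrib_right sum_distrib_left mult.commute mult.left_commute)
  also have "\<dots> = (Q * E * transpose_mat P) $$ (i mod r, i div r)"
  proof -
    have "(Q * E * transpose_mat P) $$ (i mod r, i div r) = row (Q * E) (i mod r) \<bullet> col (transpose_mat P) (i div r)"
      using ii P Q by simp
    also have "\<dots> = (\<Sum>q\<in>{0..<n'}. (Q * E) $$ (i mod r, q) * P $$ (i div r, q))"
      using ii P Q E by (simp add: scalar_prod_def)
    also have "\<dots> = (\<Sum>q\<in>{0..<n'}. (\<Sum>p\<in>{0..<r'}. Q $$ (i mod r, p) * E $$ (p, q)) * P $$ (i div r, q))"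
      by (rule sum.cong) (use ii P Q E in \<open>auto simp: scalar_prod_def\<close>)
    finally show ?thesis by simp
  qed
  also have "\<dots> = vecc (Q * E * transpose_mat P) $ i"
    using vecc_index[OF QEP i] by simp
  finally show "(kron P Q *\<^sub>v vecc E) $ i = vecc (Q * E * transpose_mat P) $ i" .
qed


lemma kron_carrier: "kron P Q \<in> carrier_mat (dim_row P * dim_row Q) (dim_col P * dim_col Q)"
  by (simp add: kron_def)

lemma smult_mult_vec: "M \<in> carrier_mat r c \<Longrightarrow> v \<in> carrier_vec c \<Longrightarrow>
  (a \<cdot>\<^sub>m M) *\<^sub>v v = a \<cdot>\<^sub>v (M *\<^sub>v (v :: real vec))"
  by (intro eq_vecI) (auto simp: scalar_prod_def sum_distrib_left mult.assoc)

lemma zero_mult_vec: "v \<in> carrier_vec c \<Longrightarrow> 0\<^sub>m r c *\<^sub>v v = 0\<^sub>v r"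
  by (intro eq_vecI) auto

lemma transpose_smult_mat: "transpose_mat (a \<cdot>\<^sub>m M) = a \<cdot>\<^sub>m transpose_mat M"
  by (intro eq_matI) auto

lemma transpose_kron: "transpose_mat (kron P Q) = kron (transpose_mat P) (transpose_mat Q)"
proof (rule eq_matI)
  show "dim_row (transpose_mat (kron P Q)) = dim_row (kron (transpose_mat P) (transpose_mat Q))"
    by (simp add: kron_def)
  show "dim_col (transpose_mat (kron P Q)) = dim_col (kron (transpose_mat P) (transpose_mat Q))"
    by (simp add: kron_def)
  fix i j assume i: "i < dim_row (kron (transpose_mat P) (transpose_mat Q))"
    and j: "j < dim_col (kron (transpose_mat P) (transpose_mat Q))"
  then have i': "i < dim_col P * dim_col Q" and j': "j < dim_row P * dim_row Q" by (simp_all add: kron_def)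
  have q1: "0 < dim_col Q" using i' by (cases "dim_col Q") auto
  have q2: "0 < dim_row Q" using j' by (cases "dim_row Q") auto
  have b: "i div dim_col Q < dim_col P" "j div dim_row Q < dim_row P"
    using i' j' by (auto simp: less_mult_imp_div_less)
  have b2: "i mod dim_col Q < dim_col Q" "j mod dim_row Q < dim_row Q" using q1 q2 by auto
  show "transpose_mat (kron P Q) $$ (i, j) = kron (transpose_mat P) (transpose_mat Q) $$ (i, j)"
    using i' j' b b2 by (simp add: kron_def)
qed

lemma transpose_msum:
  "(\<And>i. i \<in> set xs \<Longrightarrow> f i \<in> carrier_mat r c) \<Longrightarrow>
   transpose_mat (msum r c f xs) = msum c r (\<lambda>i. transpose_mat (f i)) xs"
proof (induction xs)
  case Nil then show ?case by (simp add: msum_def)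
next
  case (Cons a xs)
  have "msum r c f xs \<in> carrier_mat r c" using Cons.prems by (intro msum_carrier) auto
  moreover have "f a \<in> carrier_mat r c" using Cons.prems by simp
  ultimately show ?case using Cons by (simp add: msum_def transpose_add[of _ r c])
qed

lemma msum_kron_vecc:
  assumes "\<And>i. i \<in> set xs \<Longrightarrow> P i \<in> carrier_mat n n \<and> Q i \<in> carrier_mat r r"
    and E: "E \<in> carrier_mat r n"
  shows "msum (r * n) (r * n) (\<lambda>i. kron (P i) (Q i)) xs *\<^sub>v vecc E =
         vecc (msum r n (\<lambda>i. Q i * E * transpose_mat (P i)) xs)"
  using assms(1)
proof (induction xs)
  case Nil
  show ?case using zero_mult_vec[OF vecc_carrier[OF E]] by (simp add: msum_def vecc_zero)
next
  case (Cons a xs)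
  have Pa: "P a \<in> carrier_mat n n" and Qa: "Q a \<in> carrier_mat r r" using Cons.prems by auto
  have K: "kron (P a) (Q a) \<in> carrier_mat (r * n) (r * n)"
    using kron_carrier[of "P a" "Q a"] Pa Qa by (simp add: mult.commute)
  have S: "msum (r * n) (r * n) (\<lambda>i. kron (P i) (Q i)) xs \<in> carrier_mat (r * n) (r * n)"
  proof (rule msum_carrier)
    fix i assume "i \<in> set xs"
    then have "P i \<in> carrier_mat n n" "Q i \<in> carrier_mat r r" using Cons.prems by auto
    then show "kron (P i) (Q i) \<in> carrier_mat (r * n) (r * n)"
      using kron_carrier[of "P i" "Q i"] by (simp add: mult.commute)
  qed
  have S2: "msum r n (\<lambda>i. Q i * E * transpose_mat (P i)) xs \<in> carrier_mat r n"
  proof (rule msum_carrier)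
    fix i assume "i \<in> set xs"
    then have "P i \<in> carrier_mat n n" "Q i \<in> carrier_mat r r" using Cons.prems by auto
    then show "Q i * E * transpose_mat (P i) \<in> carrier_mat r n" using E by auto
  qed
  have T: "Q a * E * transpose_mat (P a) \<in> carrier_mat r n" using Pa Qa E by auto
  have IH: "msum (r * n) (r * n) (\<lambda>i. kron (P i) (Q i)) xs *\<^sub>v vecc E =
         vecc (msum r n (\<lambda>i. Q i * E * transpose_mat (P i)) xs)" using Cons by auto
  have "msum (r * n) (r * n) (\<lambda>i. kron (P i) (Q i)) (a # xs) *\<^sub>v vecc E =
     (kron (P a) (Q a) + msum (r * n) (r * n) (\<lambda>i. kron (P i) (Q i)) xs) *\<^sub>v vecc E"
    by (simp add: msum_def)
  also have "\<dots> = kron (P a) (Q a) *\<^sub>v vecc E + msum (r * n) (r * n) (\<lambda>i. kron (P i) (Q i)) xs *\<^sub>v vecc E"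
    by (rule add_mult_distrib_mat_vec[OF K S vecc_carrier[OF E]])
  also have "\<dots> = vecc (Q a * E * transpose_mat (P a)) + vecc (msum r n (\<lambda>i. Q i * E * transpose_mat (P i)) xs)"
    using IH kron_mult_vecc[OF Pa Qa E] by simp
  also have "\<dots> = vecc (Q a * E * transpose_mat (P a) + msum r n (\<lambda>i. Q i * E * transpose_mat (P i)) xs)"
    using vecc_add[OF T S2] by simp
  also have "\<dots> = vecc (msum r n (\<lambda>i. Q i * E * transpose_mat (P i)) (a # xs))"
    by (simp add: msum_def)
  finally show ?case .
qed

lemma kron_psd:
  fixes A B :: "real mat"
  assumes B: "B \<in> carrier_mat k n" and A: "A \<in> carrier_mat r k'" and v: "v \<in> carrier_vec (n * r)"
  shows "v \<bullet> (kron (transpose_mat B * B) (A * transpose_mat A) *\<^sub>v v) \<ge> 0"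
proof -
  define K where "K = kron (transpose_mat B * B) (A * transpose_mat A)"
  have dK: "dim_row K = n * r" "dim_col K = n * r" using A B by (simp_all add: K_def kron_def)
  have dv: "dim_vec v = n * r" using v by simp
  define F where "F a b i = v $ i * B $$ (a, i div r) * A $$ (i mod r, b)" for a b i
  have Kij: "K $$ (i, j) = (\<Sum>a\<in>{0..<k}. B $$ (a, i div r) * B $$ (a, j div r)) *
                           (\<Sum>b\<in>{0..<k'}. A $$ (i mod r, b) * A $$ (j mod r, b))"
    if i: "i < n * r" and j: "j < n * r" for i j
  proof -
    have "0 < r" using i by (cases r) auto
    then have b: "i mod r < r" "i div r < n" "j mod r < r" "j div r < n"
      using i j by (auto simp: less_mult_imp_div_less mult.commute)
    show ?thesis using A B i j b by (simp add: K_def kron_def scalar_prod_def)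
  qed
  have "v \<bullet> (K *\<^sub>v v) = (\<Sum>i\<in>{0..<n * r}. v $ i * (\<Sum>j\<in>{0..<n * r}. K $$ (i, j) * v $ j))"
    using dK dv by (simp add: scalar_prod_def)
  also have "\<dots> = (\<Sum>i\<in>{0..<n * r}. \<Sum>j\<in>{0..<n * r}. \<Sum>a\<in>{0..<k}. \<Sum>b\<in>{0..<k'}. F a b i * F a b j)"
  proof (rule sum.cong[OF refl])
    fix i assume "i \<in> {0..<n * r}"
    then have i: "i < n * r" by simp
    have "v $ i * (\<Sum>j\<in>{0..<n * r}. K $$ (i, j) * v $ j) = (\<Sum>j\<in>{0..<n * r}. v $ i * (K $$ (i, j) * v $ j))"
      by (simp add: sum_distrib_left)
    also have "\<dots> = (\<Sum>j\<in>{0..<n * r}. \<Sum>a\<in>{0..<k}. \<Sum>b\<in>{0..<k'}. F a b i * F a b j)"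
    proof (rule sum.cong[OF refl])
      fix j assume "j \<in> {0..<n * r}"
      then have j: "j < n * r" by simp
      show "v $ i * (K $$ (i, j) * v $ j) = (\<Sum>a\<in>{0..<k}. \<Sum>b\<in>{0..<k'}. F a b i * F a b j)"
        unfolding Kij[OF i j] F_def
        by (simp add: sum_distrib_left sum_distrib_right mult_ac)
    qed
    finally show "v $ i * (\<Sum>j\<in>{0..<n * r}. K $$ (i, j) * v $ j) = (\<Sum>j\<in>{0..<n * r}. \<Sum>a\<in>{0..<k}. \<Sum>b\<in>{0..<k'}. F a b i * F a b j)" .
  qed
  also have "\<dots> = (\<Sum>i\<in>{0..<n * r}. \<Sum>a\<in>{0..<k}. \<Sum>j\<in>{0..<n * r}. \<Sum>b\<in>{0..<k'}. F a b i * F a b j)"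
    by (rule sum.cong[OF refl], rule sum.swap)
  also have "\<dots> = (\<Sum>a\<in>{0..<k}. \<Sum>i\<in>{0..<n * r}. \<Sum>j\<in>{0..<n * r}. \<Sum>b\<in>{0..<k'}. F a b i * F a b j)"
    by (rule sum.swap)
  also have "\<dots> = (\<Sum>a\<in>{0..<k}. \<Sum>i\<in>{0..<n * r}. \<Sum>b\<in>{0..<k'}. \<Sum>j\<in>{0..<n * r}. F a b i * F a b j)"
    by (rule sum.cong[OF refl], rule sum.cong[OF refl], rule sum.swap)
  also have "\<dots> = (\<Sum>a\<in>{0..<k}. \<Sum>b\<in>{0..<k'}. \<Sum>i\<in>{0..<n * r}. \<Sum>j\<in>{0..<n * r}. F a b i * F a b j)"
    by (rule sum.cong[OF refl], rule sum.swap)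
  also have "\<dots> = (\<Sum>a\<in>{0..<k}. \<Sum>b\<in>{0..<k'}. (\<Sum>i\<in>{0..<n * r}. F a b i)^2)"
    by (simp add: power2_eq_square sum_product)
  also have "\<dots> \<ge> 0" by (intro sum_nonneg) simp
  finally show ?thesis unfolding K_def .
qed

lemma psd_msum:
  assumes "\<And>i. i \<in> set xs \<Longrightarrow> f i \<in> carrier_mat N N \<and> (\<forall>v \<in> carrier_vec N. v \<bullet> (f i *\<^sub>v v) \<ge> (0::real))"
    and v: "v \<in> carrier_vec N"
  shows "v \<bullet> (msum N N f xs *\<^sub>v v) \<ge> 0"
  using assms(1)
proof (induction xs)
  case Nil
  show ?case using zero_mult_vec[OF v] v by (simp add: msum_def)
next
  case (Cons a xs)
  have fa: "f a \<in> carrier_mat N N" and pa: "v \<bullet> (f a *\<^sub>v v) \<ge> 0" using Cons.prems v by auto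
  have S: "msum N N f xs \<in> carrier_mat N N" using Cons.prems by (intro msum_carrier) auto
  have IH: "v \<bullet> (msum N N f xs *\<^sub>v v) \<ge> 0" using Cons by auto
  have "msum N N f (a # xs) *\<^sub>v v = f a *\<^sub>v v + msum N N f xs *\<^sub>v v"
    unfolding msum_def using add_mult_distrib_mat_vec[OF fa S v] by (simp add: msum_def)
  then have "v \<bullet> (msum N N f (a # xs) *\<^sub>v v) = v \<bullet> (f a *\<^sub>v v) + v \<bullet> (msum N N f xs *\<^sub>v v)"
    using scalar_prod_add_distrib[OF v, of "f a *\<^sub>v v" "msum N N f xs *\<^sub>v v"] fa S v by simp
  then show ?case using IH pa by simp
qed



lemma sand_add:
  assumes "A \<in> carrier_mat r k" "N1 \<in> carrier_mat k k'" "N2 \<in> carrier_mat k k'" "B \<in> carrier_mat k' c"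
  shows "A * (N1 + N2) * B = A * N1 * B + A * N2 * B"
proof -
  have "A * (N1 + N2) = A * N1 + A * N2" by (rule mult_add_distrib_mat[OF assms(1,2,3)])
  then show ?thesis using add_mult_distrib_mat[OF mult_carrier_mat[OF assms(1,2)] mult_carrier_mat[OF assms(1,3)] assms(4)]
    by simp
qed

lemma sand_minus:
  assumes "A \<in> carrier_mat r k" "N1 \<in> carrier_mat k k'" "N2 \<in> carrier_mat k k'" "B \<in> carrier_mat k' c"
  shows "A * (N1 - N2) * B = A * N1 * B - A * (N2 :: real mat) * B"
proof -
  have "A * (N1 - N2) = A * N1 - A * N2" by (rule mult_minus_distrib_mat[OF assms(1,2,3)])
  then show ?thesis using minus_mult_distrib_mat[OF mult_carrier_mat[OF assms(1,2)] mult_carrier_mat[OF assms(1,3)] assms(4)]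
    by simp
qed

lemma sand_smult:
  assumes "A \<in> carrier_mat r k" "N \<in> carrier_mat k k'" "B \<in> carrier_mat k' c"
  shows "A * (a \<cdot>\<^sub>m N) * B = a \<cdot>\<^sub>m (A * (N :: real mat) * B)"
  using mult_smult_distrib[OF assms(1,2)] mult_smult_assoc_mat[OF mult_carrier_mat[OF assms(1,2)] assms(3)] by simp


lemma msum_index_set:
  assumes "\<And>i. i \<in> {a..<b} \<Longrightarrow> f i \<in> carrier_mat r c" "p < r" "q < c"
  shows "msum r c f [a..<b] $$ (p, q) = (\<Sum>i\<in>{a..<b}. f i $$ (p, q))"
proof -
  have "msum r c f [a..<b] $$ (p, q) = (\<Sum>i\<leftarrow>[a..<b]. f i $$ (p, q))"
    by (rule msum_index) (use assms in auto)
  also have "\<dots> = (\<Sum>i\<in>{a..<b}. f i $$ (p, q))"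
    by (metis set_upt sum_set_upt_conv_sum_list_nat)
  finally show ?thesis .
qed

lemma final_arith:
  fixes x P1 y P Pp h SG SR eM Lr Lr1 \<eta> \<beta> :: real
  assumes "eM = \<eta> * SG - \<beta> * Lr * P + \<beta> * SR" "Lr1 = Lr - 1"
  shows "x * P1 - y = ((1 + \<beta>) * (x * P - y) - \<eta> * h) + (- \<beta>) * (x * Pp - y)
     + (x * (P1 - P + eM) + x * (Lr1 * \<beta> * P + \<beta> * Pp - \<beta> * SR) + \<eta> * (h - x * SG))"
  unfolding assms by (simp add: algebra_simps)

lemma blockA_mult:
  assumes "H \<in> carrier_mat N N" "v \<in> carrier_vec N"
  shows "((a \<cdot>\<^sub>m 1\<^sub>m N - b \<cdot>\<^sub>m H) *\<^sub>v v) = a \<cdot>\<^sub>v v - b \<cdot>\<^sub>v (H *\<^sub>v (v :: real vec))"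
proof -
  have "((a \<cdot>\<^sub>m 1\<^sub>m N - b \<cdot>\<^sub>m H) *\<^sub>v v) = (a \<cdot>\<^sub>m 1\<^sub>m N) *\<^sub>v v - (b \<cdot>\<^sub>m H) *\<^sub>v v"
    by (rule minus_mult_distrib_mat_vec) (use assms in auto)
  also have "(a \<cdot>\<^sub>m 1\<^sub>m N) *\<^sub>v v = a \<cdot>\<^sub>v v" using smult_mult_vec[OF one_carrier_mat assms(2)] assms(2) by simp
  also have "(b \<cdot>\<^sub>m H) *\<^sub>v v = b \<cdot>\<^sub>v (H *\<^sub>v v)" by (rule smult_mult_vec[OF assms])
  finally show ?thesis .
qed

lemma blockB_mult:
  assumes "v \<in> carrier_vec N"
  shows "(- (b \<cdot>\<^sub>m 1\<^sub>m N)) *\<^sub>v v = (- b) \<cdot>\<^sub>v (v :: real vec)"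
proof -
  have "- (b \<cdot>\<^sub>m 1\<^sub>m N) = (- b) \<cdot>\<^sub>m 1\<^sub>m N" by (intro eq_matI) auto
  then show ?thesis using smult_mult_vec[OF one_carrier_mat assms] assms by simp
qed

context
  fixes d m dy L n :: nat and X Y :: "real mat" and \<eta> \<beta> :: real
    and W :: "nat \<Rightarrow> nat \<Rightarrow> real mat"
  assumes L1: "L \<ge> 1" and d0: "d > 0" and m0: "m > 0" and dy0: "dy > 0" and n0: "n > 0"
    and X: "X \<in> carrier_mat d n" and Y: "Y \<in> carrier_mat dy n"
    and W0: "\<forall>l. 1 \<le> l \<and> l \<le> L \<longrightarrow> W 0 l \<in> carrier_mat (ldim d m dy L l) (ldim d m dy L (l - 1))"
    and pol: "polyak_seq d m dy L X Y \<eta> \<beta> W"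
begin

abbreviation "dm \<equiv> ldim d m dy L"

lemma dm0: "dm 0 = d" by (simp add: ldim_def)
lemma dmL: "dm L = dy" using L1 by (simp add: ldim_def)

lemma lp_top:
  assumes "\<And>k. 1 \<le> k \<Longrightarrow> k \<le> L \<Longrightarrow> Wl k \<in> carrier_mat (dm k) (dm (k - 1))" and "l \<le> L"
  shows "lprod dm Wl (l + 1) L \<in> carrier_mat dy (dm l)"
proof -
  have "lprod dm Wl (Suc l) L \<in> carrier_mat (dm L) (dm (Suc l - 1))"
    by (rule lprod_carrier) (use assms in auto)
  then show ?thesis using dmL by simp
qed

lemma lp_bot:
  assumes "\<And>k. 1 \<le> k \<Longrightarrow> k \<le> L \<Longrightarrow> Wl k \<in> carrier_mat (dm k) (dm (k - 1))" and "l \<le> L" "1 \<le> l"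
  shows "lprod dm Wl 1 (l - 1) \<in> carrier_mat (dm (l - 1)) d"
proof -
  have "lprod dm Wl 1 (l - 1) \<in> carrier_mat (dm (l - 1)) (dm (1 - 1))"
    by (rule lprod_carrier) (use assms in auto)
  then show ?thesis using dm0 by simp
qed

lemma lp_all:
  assumes "\<And>k. 1 \<le> k \<Longrightarrow> k \<le> L \<Longrightarrow> Wl k \<in> carrier_mat (dm k) (dm (k - 1))"
  shows "lprod dm Wl 1 L \<in> carrier_mat dy d"
proof -
  have "lprod dm Wl 1 L \<in> carrier_mat (dm L) (dm (1 - 1))"
    by (rule lprod_carrier) (use assms L1 in auto)
  then show ?thesis using dm0 dmL by simp
qed

lemma outp_carrier:
  assumes "\<And>k. 1 \<le> k \<Longrightarrow> k \<le> L \<Longrightarrow> Wl k \<in> carrier_mat (dm k) (dm (k - 1))"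
  shows "outp d m dy L X Wl \<in> carrier_mat dy n"
  unfolding outp_def using lp_all[OF assms] X by simp

lemma grad_carrier:
  assumes "\<And>k. 1 \<le> k \<Longrightarrow> k \<le> L \<Longrightarrow> Wl k \<in> carrier_mat (dm k) (dm (k - 1))" and "l \<le> L" "1 \<le> l"
  shows "grad d m dy L X Y Wl l \<in> carrier_mat (dm l) (dm (l - 1))"
proof -
  have a: "lprod dm Wl (l + 1) L \<in> carrier_mat dy (dm l)" by (rule lp_top) (use assms in auto)
  have b: "lprod dm Wl 1 (l - 1) \<in> carrier_mat (dm (l - 1)) d" by (rule lp_bot) (use assms in auto)
  have e: "outp d m dy L X Wl - Y \<in> carrier_mat dy n" using Y by (simp add: minus_carrier_mat)
  have a': "transpose_mat (lprod dm Wl (l + 1) L) \<in> carrier_mat (dm l) dy" using a by simp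
  have b': "transpose_mat (lprod dm Wl 1 (l - 1) * X) \<in> carrier_mat n (dm (l - 1))"
    using mult_carrier_mat[OF b X] by simp
  have "transpose_mat (lprod dm Wl (l + 1) L) * (outp d m dy L X Wl - Y) * transpose_mat (lprod dm Wl 1 (l - 1) * X)
     \<in> carrier_mat (dm l) (dm (l - 1))"
    by (rule mult_carrier_mat[OF mult_carrier_mat[OF a' e] b'])
  then show ?thesis unfolding grad_def by simp
qed

lemma Wc_aux: "\<forall>l. 1 \<le> l \<and> l \<le> L \<longrightarrow> W t l \<in> carrier_mat (dm l) (dm (l - 1))"
proof (induction t rule: less_induct)
  case (less t)
  show ?case
  proof (cases t)
    case 0 then show ?thesis using W0 by simp
  next
    case (Suc t')
    have c1: "\<And>k. 1 \<le> k \<Longrightarrow> k \<le> L \<Longrightarrow> W t' k \<in> carrier_mat (dm k) (dm (k - 1))"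
      using less Suc by auto
    have c2: "\<And>k. 1 \<le> k \<Longrightarrow> k \<le> L \<Longrightarrow> W (t' - 1) k \<in> carrier_mat (dm k) (dm (k - 1))"
      using less Suc by auto
    show ?thesis
    proof (intro allI impI)
      fix l assume l: "1 \<le> l \<and> l \<le> L"
      have "W (Suc t') l = W t' l - \<eta> \<cdot>\<^sub>m grad d m dy L X Y (W t') l + \<beta> \<cdot>\<^sub>m (W t' l - W (t' - 1) l)"
        using pol l unfolding polyak_seq_def by blast
      moreover have "W (t' - 1) l \<in> carrier_mat (dm l) (dm (l - 1))" using c2 l by blast
      ultimately show "W t l \<in> carrier_mat (dm l) (dm (l - 1))" using Suc
        by (simp add: minus_carrier_mat)
    qed
  qed
qed

lemma Wc: "1 \<le> l \<Longrightarrow> l \<le> L \<Longrightarrow> W t l \<in> carrier_mat (dm l) (dm (l - 1))"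
  using Wc_aux by blast

lemma gc: "1 \<le> l \<Longrightarrow> l \<le> L \<Longrightarrow> grad d m dy L X Y (W t) l \<in> carrier_mat (dm l) (dm (l - 1))"
  by (rule grad_carrier) (use Wc in auto)

lemma mom_carrier: "1 \<le> l \<Longrightarrow> l \<le> L \<Longrightarrow> mom d m dy L X Y \<beta> W t l \<in> carrier_mat (dm l) (dm (l - 1))"
  unfolding mom_def by (rule msum_carrier) (use gc in auto)

lemma mom_index:
  assumes "1 \<le> l" "l \<le> L" "p < dm l" "q < dm (l - 1)"
  shows "mom d m dy L X Y \<beta> W t l $$ (p, q) =
    (\<Sum>s\<in>{0..<Suc t}. \<beta> ^ (t - s) * grad d m dy L X Y (W s) l $$ (p, q))"
proof -
  have "mom d m dy L X Y \<beta> W t l $$ (p, q) =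
     (\<Sum>s\<leftarrow>[0..<Suc t]. ((\<beta> ^ (t - s)) \<cdot>\<^sub>m grad d m dy L X Y (W s) l) $$ (p, q))"
    unfolding mom_def by (rule msum_index) (use gc assms in auto)
  also have "\<dots> = (\<Sum>s\<leftarrow>[0..<Suc t]. \<beta> ^ (t - s) * grad d m dy L X Y (W s) l $$ (p, q))"
    by (rule arg_cong[where f=sum_list], rule map_cong) (use carrier_matD[OF gc[OF assms(1,2)]] assms in auto)
  also have "\<dots> = (\<Sum>s\<in>{0..<Suc t}. \<beta> ^ (t - s) * grad d m dy L X Y (W s) l $$ (p, q))"
    by (simp add: sum_set_upt_conv_sum_list_nat[symmetric])
  finally show ?thesis .
qed

lemma W_step_entry:
  assumes "1 \<le> l" "l \<le> L" "p < dm l" "q < dm (l - 1)"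
  shows "W (Suc t) l $$ (p, q) = W t l $$ (p, q) -
    \<eta> * (\<Sum>s\<in>{0..<Suc t}. \<beta> ^ (t - s) * grad d m dy L X Y (W s) l $$ (p, q))"
proof (induction t)
  case 0
  have "W (Suc 0) l = W 0 l - \<eta> \<cdot>\<^sub>m grad d m dy L X Y (W 0) l + \<beta> \<cdot>\<^sub>m (W 0 l - W (0 - 1) l)"
    using pol assms unfolding polyak_seq_def by blast
  then show ?case using carrier_matD[OF Wc[OF assms(1,2)]] carrier_matD[OF gc[OF assms(1,2)]] assms(3,4) by simp
next
  case (Suc t)
  let ?g = "\<lambda>s. grad d m dy L X Y (W s) l $$ (p, q)"
  have "W (Suc (Suc t)) l = W (Suc t) l - \<eta> \<cdot>\<^sub>m grad d m dy L X Y (W (Suc t)) l + \<beta> \<cdot>\<^sub>m (W (Suc t) l - W (Suc t - 1) l)"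
    using pol assms unfolding polyak_seq_def by blast
  then have "W (Suc (Suc t)) l $$ (p, q) = W (Suc t) l $$ (p, q) - \<eta> * ?g (Suc t) + \<beta> * (W (Suc t) l $$ (p, q) - W t l $$ (p, q))"
    using carrier_matD[OF Wc[OF assms(1,2)]] carrier_matD[OF gc[OF assms(1,2)]] assms(3,4) by simp
  also have "\<dots> = W (Suc t) l $$ (p, q) - \<eta> * (?g (Suc t) + \<beta> * (\<Sum>s\<in>{0..<Suc t}. \<beta> ^ (t - s) * ?g s))"
  proof -
    have key: "\<And>a b S g::real. a - b = -(\<eta> * S) \<Longrightarrow> a - \<eta> * g + \<beta> * (a - b) = a - \<eta> * (g + \<beta> * S)"
    proof -
      fix a b S g :: real assume "a - b = -(\<eta> * S)"
      then have "\<beta> * (a - b) = \<beta> * (-(\<eta> * S))" by simp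
      then show "a - \<eta> * g + \<beta> * (a - b) = a - \<eta> * (g + \<beta> * S)" by (simp add: algebra_simps)
    qed
    have h: "W (Suc t) l $$ (p, q) - W t l $$ (p, q) = -(\<eta> * (\<Sum>s\<in>{0..<Suc t}. \<beta> ^ (t - s) * ?g s))"
      using Suc.IH by simp
    show ?thesis by (rule key[OF h])
  qed
  also have "?g (Suc t) + \<beta> * (\<Sum>s\<in>{0..<Suc t}. \<beta> ^ (t - s) * ?g s) = (\<Sum>s\<in>{0..<Suc (Suc t)}. \<beta> ^ (Suc t - s) * ?g s)"
  proof -
    have "\<beta> * (\<Sum>s\<in>{0..<Suc t}. \<beta> ^ (t - s) * ?g s) = (\<Sum>s\<in>{0..<Suc t}. \<beta> ^ (Suc t - s) * ?g s)"
      unfolding sum_distrib_left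
    proof (rule sum.cong[OF refl])
      fix s assume "s \<in> {0..<Suc t}"
      then have "Suc t - s = Suc (t - s)" by auto
      then show "\<beta> * (\<beta> ^ (t - s) * ?g s) = \<beta> ^ (Suc t - s) * ?g s" by simp
    qed
    then show ?thesis by simp
  qed
  finally show ?case .
qed

lemma W_step:
  assumes "1 \<le> l" "l \<le> L"
  shows "W (Suc t) l = W t l - \<eta> \<cdot>\<^sub>m mom d m dy L X Y \<beta> W t l"
proof (rule eq_matI)
  have c: "W (Suc t) l \<in> carrier_mat (dm l) (dm (l - 1))" "W t l \<in> carrier_mat (dm l) (dm (l - 1))"
    "mom d m dy L X Y \<beta> W t l \<in> carrier_mat (dm l) (dm (l - 1))"
    using Wc mom_carrier assms by auto
  then show "dim_row (W (Suc t) l) = dim_row (W t l - \<eta> \<cdot>\<^sub>m mom d m dy L X Y \<beta> W t l)"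
    "dim_col (W (Suc t) l) = dim_col (W t l - \<eta> \<cdot>\<^sub>m mom d m dy L X Y \<beta> W t l)" by auto
  fix p q assume "p < dim_row (W t l - \<eta> \<cdot>\<^sub>m mom d m dy L X Y \<beta> W t l)"
    "q < dim_col (W t l - \<eta> \<cdot>\<^sub>m mom d m dy L X Y \<beta> W t l)"
  then have pq: "p < dm l" "q < dm (l - 1)" using c by auto
  show "W (Suc t) l $$ (p, q) = (W t l - \<eta> \<cdot>\<^sub>m mom d m dy L X Y \<beta> W t l) $$ (p, q)"
    using W_step_entry[OF assms pq] mom_index[OF assms pq] c pq by simp
qed

lemma eta_mom:
  assumes "1 \<le> l" "l \<le> L"
  shows "\<eta> \<cdot>\<^sub>m mom d m dy L X Y \<beta> W t l =
    \<eta> \<cdot>\<^sub>m grad d m dy L X Y (W t) l - \<beta> \<cdot>\<^sub>m W t l + \<beta> \<cdot>\<^sub>m W (t - 1) l"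
proof (rule eq_matI)
  have c: "W (Suc t) l \<in> carrier_mat (dm l) (dm (l - 1))" "W t l \<in> carrier_mat (dm l) (dm (l - 1))"
    "W (t - 1) l \<in> carrier_mat (dm l) (dm (l - 1))"
    "mom d m dy L X Y \<beta> W t l \<in> carrier_mat (dm l) (dm (l - 1))"
    "grad d m dy L X Y (W t) l \<in> carrier_mat (dm l) (dm (l - 1))"
    using Wc mom_carrier gc assms by auto
  then show "dim_row (\<eta> \<cdot>\<^sub>m mom d m dy L X Y \<beta> W t l) = dim_row (\<eta> \<cdot>\<^sub>m grad d m dy L X Y (W t) l - \<beta> \<cdot>\<^sub>m W t l + \<beta> \<cdot>\<^sub>m W (t - 1) l)"
    "dim_col (\<eta> \<cdot>\<^sub>m mom d m dy L X Y \<beta> W t l) = dim_col (\<eta> \<cdot>\<^sub>m grad d m dy L X Y (W t) l - \<beta> \<cdot>\<^sub>m W t l + \<beta> \<cdot>\<^sub>m W (t - 1) l)"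
    by auto
  fix p q assume "p < dim_row (\<eta> \<cdot>\<^sub>m grad d m dy L X Y (W t) l - \<beta> \<cdot>\<^sub>m W t l + \<beta> \<cdot>\<^sub>m W (t - 1) l)"
    "q < dim_col (\<eta> \<cdot>\<^sub>m grad d m dy L X Y (W t) l - \<beta> \<cdot>\<^sub>m W t l + \<beta> \<cdot>\<^sub>m W (t - 1) l)"
  then have pq: "p < dm l" "q < dm (l - 1)" using c by auto
  have e1: "W (Suc t) l = W t l - \<eta> \<cdot>\<^sub>m grad d m dy L X Y (W t) l + \<beta> \<cdot>\<^sub>m (W t l - W (t - 1) l)"
    using pol assms unfolding polyak_seq_def by blast
  have e2: "W (Suc t) l = W t l - \<eta> \<cdot>\<^sub>m mom d m dy L X Y \<beta> W t l" by (rule W_step[OF assms])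
  have "W (Suc t) l $$ (p, q) = W t l $$ (p, q) - \<eta> * grad d m dy L X Y (W t) l $$ (p, q) + \<beta> * (W t l $$ (p, q) - W (t - 1) l $$ (p, q))"
    using arg_cong[OF e1, of "\<lambda>M. M $$ (p, q)"] c pq by simp
  moreover have "W (Suc t) l $$ (p, q) = W t l $$ (p, q) - \<eta> * mom d m dy L X Y \<beta> W t l $$ (p, q)"
    using arg_cong[OF e2, of "\<lambda>M. M $$ (p, q)"] c pq by simp
  ultimately show "(\<eta> \<cdot>\<^sub>m mom d m dy L X Y \<beta> W t l) $$ (p, q) = (\<eta> \<cdot>\<^sub>m grad d m dy L X Y (W t) l - \<beta> \<cdot>\<^sub>m W t l + \<beta> \<cdot>\<^sub>m W (t - 1) l) $$ (p, q)"
    using c pq by (simp add: algebra_simps)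
qed



lemma vecc_smult: "vecc (a \<cdot>\<^sub>m M) = a \<cdot>\<^sub>v vecc M"
proof (rule eq_vecI)
  show "dim_vec (vecc (a \<cdot>\<^sub>m M)) = dim_vec (a \<cdot>\<^sub>v vecc M)" by simp
  fix i assume "i < dim_vec (a \<cdot>\<^sub>v vecc M)"
  then have i: "i < dim_row M * dim_col M" by simp
  then have "0 < dim_row M" by (cases "dim_row M") auto
  then have b: "i mod dim_row M < dim_row M" "i div dim_row M < dim_col M"
    using i by (auto simp: less_mult_imp_div_less mult.commute)
  show "vecc (a \<cdot>\<^sub>m M) $ i = (a \<cdot>\<^sub>v vecc M) $ i"
    using i b by (simp add: vecc_def)
qed

lemma Ac: "l \<le> L \<Longrightarrow> lprod dm (W t) (l + 1) L \<in> carrier_mat dy (dm l)"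
  by (rule lp_top) (use Wc in auto)

lemma Bc: "1 \<le> l \<Longrightarrow> l \<le> L \<Longrightarrow> lprod dm (W t) 1 (l - 1) \<in> carrier_mat (dm (l - 1)) d"
  by (rule lp_bot) (use Wc in auto)

lemma BXc: "1 \<le> l \<Longrightarrow> l \<le> L \<Longrightarrow> lprod dm (W t) 1 (l - 1) * X \<in> carrier_mat (dm (l - 1)) n"
  using Bc X by (rule mult_carrier_mat)

lemma Pc: "lprod dm (W t) 1 L * X \<in> carrier_mat dy n"
  using lp_all[of "W t"] Wc X by (intro mult_carrier_mat) auto

lemma Ec: "outp d m dy L X (W t) - Y \<in> carrier_mat dy n"
  using Y by (rule minus_carrier_mat)

lemma colX: "dim_col X = n" using X by auto

lemma kron_term_carrier:
  assumes "1 \<le> l" "l \<le> L"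
  shows "kron (transpose_mat (lprod dm (W t) 1 (l - 1) * X) * (lprod dm (W t) 1 (l - 1) * X))
            (lprod dm (W t) (l + 1) L * transpose_mat (lprod dm (W t) (l + 1) L)) \<in> carrier_mat (dy * n) (dy * n)"
proof -
  have bx: "lprod dm (W t) 1 (l - 1) * X \<in> carrier_mat (dm (l - 1)) n" by (rule BXc[OF assms])
  have tbx: "transpose_mat (lprod dm (W t) 1 (l - 1) * X) \<in> carrier_mat n (dm (l - 1))" using bx by simp
  have a: "transpose_mat (lprod dm (W t) 1 (l - 1) * X) * (lprod dm (W t) 1 (l - 1) * X) \<in> carrier_mat n n"
    by (rule mult_carrier_mat[OF tbx bx])
  have ac: "lprod dm (W t) (l + 1) L \<in> carrier_mat dy (dm l)" by (rule Ac[OF assms(2)])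
  have tac: "transpose_mat (lprod dm (W t) (l + 1) L) \<in> carrier_mat (dm l) dy" using ac by simp
  have b: "lprod dm (W t) (l + 1) L * transpose_mat (lprod dm (W t) (l + 1) L) \<in> carrier_mat dy dy"
    by (rule mult_carrier_mat[OF ac tac])
  have da: "dim_row (transpose_mat (lprod dm (W t) 1 (l - 1) * X) * (lprod dm (W t) 1 (l - 1) * X)) = n"
    "dim_col (transpose_mat (lprod dm (W t) 1 (l - 1) * X) * (lprod dm (W t) 1 (l - 1) * X)) = n"
    using carrier_matD[OF a] by auto
  have db: "dim_row (lprod dm (W t) (l + 1) L * transpose_mat (lprod dm (W t) (l + 1) L)) = dy"
    "dim_col (lprod dm (W t) (l + 1) L * transpose_mat (lprod dm (W t) (l + 1) L)) = dy"
    using carrier_matD[OF b] by auto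
  have "kron (transpose_mat (lprod dm (W t) 1 (l - 1) * X) * (lprod dm (W t) 1 (l - 1) * X))
            (lprod dm (W t) (l + 1) L * transpose_mat (lprod dm (W t) (l + 1) L)) \<in> carrier_mat (n * dy) (n * dy)"
    using kron_carrier[of "transpose_mat (lprod dm (W t) 1 (l - 1) * X) * (lprod dm (W t) 1 (l - 1) * X)"
       "lprod dm (W t) (l + 1) L * transpose_mat (lprod dm (W t) (l + 1) L)"] unfolding da db .
  then show ?thesis by (simp only: mult.commute)
qed

lemma msumH_carrier:
  "msum (dy * n) (dy * n)
     (\<lambda>l. kron (transpose_mat (lprod dm (W t) 1 (l - 1) * X) * (lprod dm (W t) 1 (l - 1) * X))
                (lprod dm (W t) (l + 1) L * transpose_mat (lprod dm (W t) (l + 1) L))) [1..<Suc L]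
   \<in> carrier_mat (dy * n) (dy * n)"
  by (rule msum_carrier) (use kron_term_carrier in auto)

lemma Hmat_eq:
  "Hmat d m dy L X (W t) = (1 / (real m ^ (L - 1) * real dy)) \<cdot>\<^sub>m
     msum (dy * n) (dy * n)
     (\<lambda>l. kron (transpose_mat (lprod dm (W t) 1 (l - 1) * X) * (lprod dm (W t) 1 (l - 1) * X))
                (lprod dm (W t) (l + 1) L * transpose_mat (lprod dm (W t) (l + 1) L))) [1..<Suc L]"
  unfolding Hmat_def colX by (rule refl)

lemma Hc: "Hmat d m dy L X (W t) \<in> carrier_mat (dy * n) (dy * n)"
  unfolding Hmat_eq using msumH_carrier by simp

lemma psd_H: "psd (Hmat d m dy L X (W t))"
proof -
  let ?a = "1 / (real m ^ (L - 1) * real dy)"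
  let ?P = "\<lambda>l. transpose_mat (lprod dm (W t) 1 (l - 1) * X) * (lprod dm (W t) 1 (l - 1) * X)"
  let ?Q = "\<lambda>l. lprod dm (W t) (l + 1) L * transpose_mat (lprod dm (W t) (l + 1) L)"
  let ?S = "msum (dy * n) (dy * n) (\<lambda>l. kron (?P l) (?Q l)) [1..<Suc L]"
  have H: "Hmat d m dy L X (W t) = ?a \<cdot>\<^sub>m ?S" by (rule Hmat_eq)
  have S: "?S \<in> carrier_mat (dy * n) (dy * n)" by (rule msumH_carrier)
  have dims: "dim_row (Hmat d m dy L X (W t)) = dy * n" "dim_col (Hmat d m dy L X (W t)) = dy * n"
    using Hc by auto
  have "transpose_mat ?S = msum (dy * n) (dy * n) (\<lambda>l. transpose_mat (kron (?P l) (?Q l))) [1..<Suc L]"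
    by (rule transpose_msum) (use kron_term_carrier in auto)
  also have "\<dots> = ?S"
  proof (rule msum_cong)
    fix l assume "l \<in> set [1..<Suc L]"
    then have l1: "1 \<le> l" "l \<le> L" by auto
    have bx: "lprod dm (W t) 1 (l - 1) * X \<in> carrier_mat (dm (l - 1)) n" by (rule BXc[OF l1])
    have tbx: "transpose_mat (lprod dm (W t) 1 (l - 1) * X) \<in> carrier_mat n (dm (l - 1))" using bx by simp
    have ac: "lprod dm (W t) (l + 1) L \<in> carrier_mat dy (dm l)" by (rule Ac[OF l1(2)])
    have tac: "transpose_mat (lprod dm (W t) (l + 1) L) \<in> carrier_mat (dm l) dy" using ac by simp
    have "transpose_mat (?P l) = ?P l" using transpose_mult[OF tbx bx] by (simp only: transpose_transpose)
    moreover have "transpose_mat (?Q l) = ?Q l" using transpose_mult[OF ac tac] by (simp only: transpose_transpose)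
    ultimately show "transpose_mat (kron (?P l) (?Q l)) = kron (?P l) (?Q l)"
      by (simp add: transpose_kron)
  qed
  finally have tS: "transpose_mat ?S = ?S" .
  have sym: "transpose_mat (Hmat d m dy L X (W t)) = Hmat d m dy L X (W t)"
    unfolding H transpose_smult_mat tS by (rule refl)
  have quad: "v \<bullet> (Hmat d m dy L X (W t) *\<^sub>v v) \<ge> 0" if v: "v \<in> carrier_vec (dy * n)" for v
  proof -
    have "Hmat d m dy L X (W t) *\<^sub>v v = ?a \<cdot>\<^sub>v (?S *\<^sub>v v)"
      unfolding H by (rule smult_mult_vec[OF S v])
    then have "v \<bullet> (Hmat d m dy L X (W t) *\<^sub>v v) = ?a * (v \<bullet> (?S *\<^sub>v v))"
      using S v by simp
    moreover have "v \<bullet> (?S *\<^sub>v v) \<ge> 0"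
    proof (rule psd_msum[OF _ v])
      fix l assume l: "l \<in> set [1..<Suc L]"
      then have l1: "1 \<le> l" "l \<le> L" by auto
      show "kron (?P l) (?Q l) \<in> carrier_mat (dy * n) (dy * n) \<and>
            (\<forall>w\<in>carrier_vec (dy * n). 0 \<le> w \<bullet> (kron (?P l) (?Q l) *\<^sub>v w))"
      proof (intro conjI ballI)
        show "kron (?P l) (?Q l) \<in> carrier_mat (dy * n) (dy * n)" by (rule kron_term_carrier[OF l1])
        fix w :: "real vec" assume w: "w \<in> carrier_vec (dy * n)"
        then have w': "w \<in> carrier_vec (n * dy)" by (simp add: mult.commute)
        show "0 \<le> w \<bullet> (kron (?P l) (?Q l) *\<^sub>v w)"
          by (rule kron_psd[OF BXc[OF l1] Ac[OF l1(2)] w'])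
      qed
    qed
    moreover have "?a \<ge> 0" by simp
    ultimately show ?thesis by simp
  qed
  show ?thesis unfolding psd_def using dims sym quad by simp
qed

lemma smult_smult_m: "a \<cdot>\<^sub>m (b \<cdot>\<^sub>m (M :: real mat)) = (a * b) \<cdot>\<^sub>m M"
  by (intro eq_matI) auto

lemma c_sq: "nrm m dy L * nrm m dy L = real m ^ (L - 1) * real dy"
proof -
  have "0 \<le> real m ^ (L - 1) * real dy" by simp
  then show ?thesis unfolding nrm_def real_sqrt_mult_self by (rule abs_of_nonneg)
qed

lemma c_pos: "nrm m dy L > 0"
  unfolding nrm_def using m0 dy0 by simp

lemma H_xi:
  "Hmat d m dy L X (W t) *\<^sub>v xi d m dy L X Y W t =
   vecc ((1 / nrm m dy L) \<cdot>\<^sub>m msum dy n (\<lambda>l. lprod dm (W t) (l + 1) L * grad d m dy L X Y (W t) l * (lprod dm (W t) 1 (l - 1) * X)) [1..<Suc L])"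
proof -
  let ?c = "nrm m dy L"
  let ?a = "1 / (real m ^ (L - 1) * real dy)"
  let ?E = "outp d m dy L X (W t) - Y"
  let ?BX = "\<lambda>l. lprod dm (W t) 1 (l - 1) * X"
  let ?A = "\<lambda>l. lprod dm (W t) (l + 1) L"
  let ?P = "\<lambda>l. transpose_mat (?BX l) * ?BX l"
  let ?Q = "\<lambda>l. ?A l * transpose_mat (?A l)"
  let ?S = "msum (dy * n) (dy * n) (\<lambda>l. kron (?P l) (?Q l)) [1..<Suc L]"
  let ?S2 = "msum dy n (\<lambda>l. ?Q l * ?E * transpose_mat (?P l)) [1..<Suc L]"
  let ?G = "msum dy n (\<lambda>l. ?A l * grad d m dy L X Y (W t) l * ?BX l) [1..<Suc L]"
  have E: "?E \<in> carrier_mat dy n" by (rule Ec)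
  have vE: "vecc ?E \<in> carrier_vec (dy * n)" by (rule vecc_carrier[OF E])
  have "Hmat d m dy L X (W t) *\<^sub>v xi d m dy L X Y W t = ?a \<cdot>\<^sub>v (?S *\<^sub>v vecc ?E)"
    unfolding Hmat_eq xi_def by (rule smult_mult_vec[OF msumH_carrier vE])
  also have "?S *\<^sub>v vecc ?E = vecc ?S2"
  proof (rule msum_kron_vecc[OF _ E])
    fix l assume "l \<in> set [1..<Suc L]"
    then have l1: "1 \<le> l" "l \<le> L" by auto
    have bx: "?BX l \<in> carrier_mat (dm (l - 1)) n" by (rule BXc[OF l1])
    have tbx: "transpose_mat (?BX l) \<in> carrier_mat n (dm (l - 1))" using bx by simp
    have ac: "?A l \<in> carrier_mat dy (dm l)" by (rule Ac[OF l1(2)])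
    have tac: "transpose_mat (?A l) \<in> carrier_mat (dm l) dy" using ac by simp
    show "?P l \<in> carrier_mat n n \<and> ?Q l \<in> carrier_mat dy dy"
      using mult_carrier_mat[OF tbx bx] mult_carrier_mat[OF ac tac] by simp
  qed
  also have "?a \<cdot>\<^sub>v vecc ?S2 = vecc (?a \<cdot>\<^sub>m ?S2)" by (simp add: vecc_smult)
  also have "?a \<cdot>\<^sub>m ?S2 = (1 / ?c) \<cdot>\<^sub>m ?G"
  proof -
    have "?a \<cdot>\<^sub>m ?S2 = msum dy n (\<lambda>l. ?a \<cdot>\<^sub>m (?Q l * ?E * transpose_mat (?P l))) [1..<Suc L]"
    proof (rule msum_smult)
      fix l assume "l \<in> set [1..<Suc L]"
      then have l1: "1 \<le> l" "l \<le> L" by auto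
      have bx: "?BX l \<in> carrier_mat (dm (l - 1)) n" by (rule BXc[OF l1])
      have tbx: "transpose_mat (?BX l) \<in> carrier_mat n (dm (l - 1))" using bx by simp
      have ac: "?A l \<in> carrier_mat dy (dm l)" by (rule Ac[OF l1(2)])
      have tac: "transpose_mat (?A l) \<in> carrier_mat (dm l) dy" using ac by simp
      show "?Q l * ?E * transpose_mat (?P l) \<in> carrier_mat dy n"
        using mult_carrier_mat[OF tbx bx] mult_carrier_mat[OF ac tac] E by simp
    qed
    also have "\<dots> = msum dy n (\<lambda>l. (1 / ?c) \<cdot>\<^sub>m (?A l * grad d m dy L X Y (W t) l * ?BX l)) [1..<Suc L]"
    proof (rule msum_cong)
      fix l assume "l \<in> set [1..<Suc L]"
      then have l1: "1 \<le> l" "l \<le> L" by auto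
      have bx: "?BX l \<in> carrier_mat (dm (l - 1)) n" by (rule BXc[OF l1])
      have tbx: "transpose_mat (?BX l) \<in> carrier_mat n (dm (l - 1))" using bx by simp
      have ac: "?A l \<in> carrier_mat dy (dm l)" by (rule Ac[OF l1(2)])
      have tac: "transpose_mat (?A l) \<in> carrier_mat (dm l) dy" using ac by simp
      let ?M1 = "transpose_mat (?A l) * ?E * transpose_mat (?BX l)"
      have m1: "?M1 \<in> carrier_mat (dm l) (dm (l - 1))" using tac E tbx by simp
      have g: "grad d m dy L X Y (W t) l = (1 / ?c) \<cdot>\<^sub>m ?M1" unfolding grad_def by (rule refl)
      have tP: "transpose_mat (?P l) = ?P l" using transpose_mult[OF tbx bx] by (simp only: transpose_transpose)
      have "?A l * grad d m dy L X Y (W t) l * ?BX l = (1 / ?c) \<cdot>\<^sub>m (?A l * ?M1 * ?BX l)"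
        unfolding g mult_smult_distrib[OF ac m1] using mult_smult_assoc_mat[OF mult_carrier_mat[OF ac m1] bx] .
      also have "?A l * ?M1 * ?BX l = ?Q l * ?E * ?P l"
      proof -
        have s1: "?A l * ?M1 = ?A l * (transpose_mat (?A l) * ?E) * transpose_mat (?BX l)"
          using assoc_mult_mat[OF ac mult_carrier_mat[OF tac E] tbx] by simp
        have s2: "?A l * (transpose_mat (?A l) * ?E) = ?A l * transpose_mat (?A l) * ?E"
          using assoc_mult_mat[OF ac tac E] by simp
        show ?thesis unfolding s1 s2
          by (rule assoc_mult_mat[OF mult_carrier_mat[OF mult_carrier_mat[OF ac tac] E] tbx bx])
      qed
      finally have "(1 / ?c) \<cdot>\<^sub>m (?A l * grad d m dy L X Y (W t) l * ?BX l) = ((1 / ?c) * (1 / ?c)) \<cdot>\<^sub>m (?Q l * ?E * ?P l)"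
        by (simp add: smult_smult_m)
      also have "(1 / ?c) * (1 / ?c) = ?a" using c_sq by simp
      finally show "?a \<cdot>\<^sub>m (?Q l * ?E * transpose_mat (?P l)) = (1 / ?c) \<cdot>\<^sub>m (?A l * grad d m dy L X Y (W t) l * ?BX l)"
        unfolding tP by simp
    qed
    also have "\<dots> = (1 / ?c) \<cdot>\<^sub>m ?G"
    proof (rule msum_smult[symmetric])
      fix l assume "l \<in> set [1..<Suc L]"
      then have l1: "1 \<le> l" "l \<le> L" by auto
      show "?A l * grad d m dy L X Y (W t) l * ?BX l \<in> carrier_mat dy n"
        using Ac[OF l1(2)] gc[OF l1] BXc[OF l1] by (meson mult_carrier_mat)
    qed
    finally show ?thesis .
  qed
  finally show ?thesis .
qed

lemma lin_mat:
  assumes l1: "1 \<le> l" "l \<le> L"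
  shows "\<eta> \<cdot>\<^sub>m (lprod dm (W t) (l + 1) L * mom d m dy L X Y \<beta> W t l * lprod dm (W t) 1 (l - 1) * X) =
    \<eta> \<cdot>\<^sub>m (lprod dm (W t) (l + 1) L * grad d m dy L X Y (W t) l * (lprod dm (W t) 1 (l - 1) * X))
    - \<beta> \<cdot>\<^sub>m (lprod dm (W t) 1 L * X)
    + \<beta> \<cdot>\<^sub>m (lprod dm (W t) (l + 1) L * W (t - 1) l * lprod dm (W t) 1 (l - 1) * X)"
proof -
  let ?A = "lprod dm (W t) (l + 1) L"
  let ?B = "lprod dm (W t) 1 (l - 1)"
  let ?M = "mom d m dy L X Y \<beta> W t l"
  let ?g = "grad d m dy L X Y (W t) l"
  have ac: "?A \<in> carrier_mat dy (dm l)" by (rule Ac[OF l1(2)])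
  have bc: "?B \<in> carrier_mat (dm (l - 1)) d" by (rule Bc[OF l1])
  have bx: "?B * X \<in> carrier_mat (dm (l - 1)) n" by (rule BXc[OF l1])
  have mc: "?M \<in> carrier_mat (dm l) (dm (l - 1))" by (rule mom_carrier[OF l1])
  have gcc: "?g \<in> carrier_mat (dm l) (dm (l - 1))" by (rule gc[OF l1])
  have wc: "W t l \<in> carrier_mat (dm l) (dm (l - 1))" by (rule Wc[OF l1])
  have wpc: "W (t - 1) l \<in> carrier_mat (dm l) (dm (l - 1))" by (rule Wc[OF l1])
  have as1: "\<And>N. N \<in> carrier_mat (dm l) (dm (l - 1)) \<Longrightarrow> ?A * N * ?B * X = ?A * N * (?B * X)"
    using ac bc X by (meson assoc_mult_mat mult_carrier_mat)
  have "\<eta> \<cdot>\<^sub>m (?A * ?M * ?B * X) = \<eta> \<cdot>\<^sub>m (?A * ?M * (?B * X))" using as1[OF mc] by simp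
  also have "\<dots> = ?A * (\<eta> \<cdot>\<^sub>m ?M) * (?B * X)" by (rule sand_smult[OF ac mc bx, symmetric])
  also have "\<eta> \<cdot>\<^sub>m ?M = \<eta> \<cdot>\<^sub>m ?g - \<beta> \<cdot>\<^sub>m W t l + \<beta> \<cdot>\<^sub>m W (t - 1) l" by (rule eta_mom[OF l1])
  also have "?A * (\<eta> \<cdot>\<^sub>m ?g - \<beta> \<cdot>\<^sub>m W t l + \<beta> \<cdot>\<^sub>m W (t - 1) l) * (?B * X)
     = ?A * (\<eta> \<cdot>\<^sub>m ?g - \<beta> \<cdot>\<^sub>m W t l) * (?B * X) + ?A * (\<beta> \<cdot>\<^sub>m W (t - 1) l) * (?B * X)"
    by (rule sand_add[OF ac _ _ bx]) (use gcc wc wpc in \<open>auto intro: minus_carrier_mat\<close>)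
  also have "?A * (\<eta> \<cdot>\<^sub>m ?g - \<beta> \<cdot>\<^sub>m W t l) * (?B * X) = ?A * (\<eta> \<cdot>\<^sub>m ?g) * (?B * X) - ?A * (\<beta> \<cdot>\<^sub>m W t l) * (?B * X)"
    by (rule sand_minus[OF ac _ _ bx]) (use gcc wc in auto)
  also have "?A * (\<eta> \<cdot>\<^sub>m ?g) * (?B * X) = \<eta> \<cdot>\<^sub>m (?A * ?g * (?B * X))" by (rule sand_smult[OF ac gcc bx])
  also have "?A * (\<beta> \<cdot>\<^sub>m W t l) * (?B * X) = \<beta> \<cdot>\<^sub>m (?A * W t l * (?B * X))" by (rule sand_smult[OF ac wc bx])
  also have "?A * (\<beta> \<cdot>\<^sub>m W (t - 1) l) * (?B * X) = \<beta> \<cdot>\<^sub>m (?A * W (t - 1) l * (?B * X))" by (rule sand_smult[OF ac wpc bx])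
  also have "?A * W t l * (?B * X) = lprod dm (W t) 1 L * X"
  proof -
    have "?A * W t l * ?B = lprod dm (W t) 1 L"
      by (rule lprod_split3) (use Wc l1 in auto)
    then show ?thesis using as1[OF wc] by simp
  qed
  also have "?A * W (t - 1) l * (?B * X) = ?A * W (t - 1) l * ?B * X" using as1[OF wpc] by simp
  finally show ?thesis .
qed

lemma PhiX:
  "Phi d m dy L X Y \<eta> \<beta> W t * X = lprod dm (W (Suc t)) 1 L * X - lprod dm (W t) 1 L * X
     + \<eta> \<cdot>\<^sub>m msum dy n (\<lambda>l. lprod dm (W t) (l + 1) L * mom d m dy L X Y \<beta> W t l * lprod dm (W t) 1 (l - 1) * X) [1..<Suc L]"
proof -
  let ?Pi = "lprod dm (\<lambda>l. W t l - \<eta> \<cdot>\<^sub>m mom d m dy L X Y \<beta> W t l) 1 L"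
  let ?Mt = "msum dy d (\<lambda>l. lprod dm (W t) (l + 1) L * mom d m dy L X Y \<beta> W t l * lprod dm (W t) 1 (l - 1)) [1..<Suc L]"
  have pi: "?Pi = lprod dm (W (Suc t)) 1 L"
    by (rule lprod_cong) (use W_step in auto)
  have c1: "lprod dm (W (Suc t)) 1 L \<in> carrier_mat dy d" by (rule lp_all) (use Wc in auto)
  have c2: "lprod dm (W t) 1 L \<in> carrier_mat dy d" by (rule lp_all) (use Wc in auto)
  have termc: "\<And>l. l \<in> set [1..<Suc L] \<Longrightarrow> lprod dm (W t) (l + 1) L * mom d m dy L X Y \<beta> W t l * lprod dm (W t) 1 (l - 1) \<in> carrier_mat dy d"
  proof -
    fix l assume "l \<in> set [1..<Suc L]"
    then have l1: "1 \<le> l" "l \<le> L" by auto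
    show "lprod dm (W t) (l + 1) L * mom d m dy L X Y \<beta> W t l * lprod dm (W t) 1 (l - 1) \<in> carrier_mat dy d"
      using Ac[OF l1(2)] mom_carrier[OF l1] Bc[OF l1] by (meson mult_carrier_mat)
  qed
  have c3: "?Mt \<in> carrier_mat dy d" by (rule msum_carrier[OF termc])
  have "Phi d m dy L X Y \<eta> \<beta> W t * X = (lprod dm (W (Suc t)) 1 L - lprod dm (W t) 1 L + \<eta> \<cdot>\<^sub>m ?Mt) * X"
    unfolding Phi_def pi by (rule refl)
  also have "\<dots> = (lprod dm (W (Suc t)) 1 L - lprod dm (W t) 1 L) * X + (\<eta> \<cdot>\<^sub>m ?Mt) * X"
    by (rule add_mult_distrib_mat[OF minus_carrier_mat[OF c2] smult_carrier_mat[OF c3] X])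
  also have "(lprod dm (W (Suc t)) 1 L - lprod dm (W t) 1 L) * X = lprod dm (W (Suc t)) 1 L * X - lprod dm (W t) 1 L * X"
    by (rule minus_mult_distrib_mat[OF c1 c2 X])
  also have "(\<eta> \<cdot>\<^sub>m ?Mt) * X = \<eta> \<cdot>\<^sub>m (?Mt * X)" by (rule mult_smult_assoc_mat[OF c3 X])
  also have "?Mt * X = msum dy n (\<lambda>l. lprod dm (W t) (l + 1) L * mom d m dy L X Y \<beta> W t l * lprod dm (W t) 1 (l - 1) * X) [1..<Suc L]"
    by (rule msum_mult[OF termc X])
  finally show ?thesis .
qed

lemma main_step:
  "xi d m dy L X Y W (Suc t) @\<^sub>v xi d m dy L X Y W t =
           four_block_mat ((1 + \<beta>) \<cdot>\<^sub>m 1\<^sub>m (dy * n) - \<eta> \<cdot>\<^sub>m Hmat d m dy L X (W 0)) (- (\<beta> \<cdot>\<^sub>m 1\<^sub>m (dy * n)))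
                          (1\<^sub>m (dy * n)) (0\<^sub>m (dy * n) (dy * n))
             *\<^sub>v (xi d m dy L X Y W t @\<^sub>v xi d m dy L X Y W (t - 1))
           + ((phi d m dy L X Y \<eta> \<beta> W t + psi d m dy L X \<beta> W t + iota d m dy L X Y \<eta> W t) @\<^sub>v 0\<^sub>v (dy * n))"
proof -
  let ?N = "dy * n"
  let ?xi = "xi d m dy L X Y W"
  let ?c = "nrm m dy L"
  let ?x = "1 / ?c"
  let ?H0 = "Hmat d m dy L X (W 0)"
  let ?Ht = "Hmat d m dy L X (W t)"
  let ?A1 = "(1 + \<beta>) \<cdot>\<^sub>m 1\<^sub>m ?N - \<eta> \<cdot>\<^sub>m ?H0"
  let ?B1 = "- (\<beta> \<cdot>\<^sub>m 1\<^sub>m ?N)"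
  let ?z = "phi d m dy L X Y \<eta> \<beta> W t + psi d m dy L X \<beta> W t + iota d m dy L X Y \<eta> W t"
  let ?Pm = "\<lambda>s. lprod dm (W s) 1 L * X"
  let ?Ga = "\<lambda>l. lprod dm (W t) (l + 1) L * grad d m dy L X Y (W t) l * (lprod dm (W t) 1 (l - 1) * X)"
  let ?Ml = "\<lambda>l. lprod dm (W t) (l + 1) L * mom d m dy L X Y \<beta> W t l * lprod dm (W t) 1 (l - 1) * X"
  let ?Rl = "\<lambda>l. lprod dm (W t) (l + 1) L * W (t - 1) l * lprod dm (W t) 1 (l - 1) * X"
  have xc: "\<And>s. ?xi s \<in> carrier_vec ?N" unfolding xi_def by (rule vecc_carrier[OF Ec])
  have H0c: "?H0 \<in> carrier_mat ?N ?N" by (rule Hc)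
  have Htc: "?Ht \<in> carrier_mat ?N ?N" by (rule Hc)
  have A1c: "?A1 \<in> carrier_mat ?N ?N" by (rule minus_carrier_mat[OF smult_carrier_mat[OF H0c]])
  have B1c: "?B1 \<in> carrier_mat ?N ?N" by simp
  have Gac: "\<And>l. l \<in> {1..<Suc L} \<Longrightarrow> ?Ga l \<in> carrier_mat dy n"
  proof -
    fix l assume "l \<in> {1..<Suc L}" then have l1: "1 \<le> l" "l \<le> L" by auto
    show "?Ga l \<in> carrier_mat dy n" using Ac[OF l1(2)] gc[OF l1] BXc[OF l1] by (meson mult_carrier_mat)
  qed
  have Mlc: "\<And>l. l \<in> {1..<Suc L} \<Longrightarrow> ?Ml l \<in> carrier_mat dy n"
  proof -
    fix l assume "l \<in> {1..<Suc L}" then have l1: "1 \<le> l" "l \<le> L" by auto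
    show "?Ml l \<in> carrier_mat dy n" using Ac[OF l1(2)] mom_carrier[OF l1] Bc[OF l1] X by (meson mult_carrier_mat)
  qed
  have Rlc: "\<And>l. l \<in> {1..<Suc L} \<Longrightarrow> ?Rl l \<in> carrier_mat dy n"
  proof -
    fix l assume "l \<in> {1..<Suc L}" then have l1: "1 \<le> l" "l \<le> L" by auto
    show "?Rl l \<in> carrier_mat dy n" using Ac[OF l1(2)] Wc[OF l1] Bc[OF l1] X by (meson mult_carrier_mat)
  qed
  have GSc: "msum dy n ?Ga [1..<Suc L] \<in> carrier_mat dy n" by (rule msum_carrier) (use Gac in auto)
  have MSc: "msum dy n ?Ml [1..<Suc L] \<in> carrier_mat dy n" by (rule msum_carrier) (use Mlc in auto)
  have RSc: "msum dy n ?Rl [1..<Suc L] \<in> carrier_mat dy n" by (rule msum_carrier) (use Rlc in auto)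
  have PhiXc: "Phi d m dy L X Y \<eta> \<beta> W t * X \<in> carrier_mat dy n"
    unfolding PhiX by (rule add_carrier_mat[OF smult_carrier_mat[OF MSc]])
  let ?PsiM = "(real (L - 1) * \<beta>) \<cdot>\<^sub>m (?Pm t) + \<beta> \<cdot>\<^sub>m (?Pm (t - 1)) - \<beta> \<cdot>\<^sub>m msum dy n ?Rl [1..<Suc L]"
  have psi_eq: "psi d m dy L X \<beta> W t = vecc (?x \<cdot>\<^sub>m ?PsiM)" unfolding psi_def colX by (rule refl)
  have PsiMc: "?PsiM \<in> carrier_mat dy n" by (rule minus_carrier_mat[OF smult_carrier_mat[OF RSc]])
  have phic: "phi d m dy L X Y \<eta> \<beta> W t \<in> carrier_vec ?N"
    unfolding phi_def by (rule vecc_carrier[OF smult_carrier_mat[OF PhiXc]])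
  have psic: "psi d m dy L X \<beta> W t \<in> carrier_vec ?N"
    unfolding psi_eq by (rule vecc_carrier[OF smult_carrier_mat[OF PsiMc]])
  have iotac: "iota d m dy L X Y \<eta> W t \<in> carrier_vec ?N"
    unfolding iota_def using mult_mat_vec_carrier[OF minus_carrier_mat[OF Htc] xc[of t]] by simp
  have zc: "?z \<in> carrier_vec ?N" using phic psic iotac by simp
  have fb: "four_block_mat ?A1 ?B1 (1\<^sub>m ?N) (0\<^sub>m ?N ?N) *\<^sub>v (?xi t @\<^sub>v ?xi (t - 1))
     = (?A1 *\<^sub>v ?xi t + ?B1 *\<^sub>v ?xi (t - 1)) @\<^sub>v (1\<^sub>m ?N *\<^sub>v ?xi t + 0\<^sub>m ?N ?N *\<^sub>v ?xi (t - 1))"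
    by (rule four_block_mat_mult_vec[OF A1c B1c one_carrier_mat zero_carrier_mat xc xc])
  have v1c: "?A1 *\<^sub>v ?xi t + ?B1 *\<^sub>v ?xi (t - 1) \<in> carrier_vec ?N"
    by (rule add_carrier_vec[OF mult_mat_vec_carrier[OF A1c xc] mult_mat_vec_carrier[OF B1c xc]])
  have v2c: "1\<^sub>m ?N *\<^sub>v ?xi t + 0\<^sub>m ?N ?N *\<^sub>v ?xi (t - 1) \<in> carrier_vec ?N"
    by (rule add_carrier_vec[OF mult_mat_vec_carrier[OF one_carrier_mat xc] mult_mat_vec_carrier[OF zero_carrier_mat xc]])
  have sum_eq: "((?A1 *\<^sub>v ?xi t + ?B1 *\<^sub>v ?xi (t - 1)) @\<^sub>v (1\<^sub>m ?N *\<^sub>v ?xi t + 0\<^sub>m ?N ?N *\<^sub>v ?xi (t - 1)))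
      + (?z @\<^sub>v 0\<^sub>v ?N) = (?A1 *\<^sub>v ?xi t + ?B1 *\<^sub>v ?xi (t - 1) + ?z) @\<^sub>v (1\<^sub>m ?N *\<^sub>v ?xi t + 0\<^sub>m ?N ?N *\<^sub>v ?xi (t - 1) + 0\<^sub>v ?N)"
    by (rule append_vec_add[OF v1c zc v2c zero_carrier_vec])
  have second: "?xi t = 1\<^sub>m ?N *\<^sub>v ?xi t + 0\<^sub>m ?N ?N *\<^sub>v ?xi (t - 1) + 0\<^sub>v ?N"
    using xc[of t] xc[of "t - 1"] zero_mult_vec[OF xc[of "t - 1"], of ?N] by simp
  have first: "?xi (Suc t) = ?A1 *\<^sub>v ?xi t + ?B1 *\<^sub>v ?xi (t - 1) + ?z"
  proof (rule eq_vecI)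
    show "dim_vec (?xi (Suc t)) = dim_vec (?A1 *\<^sub>v ?xi t + ?B1 *\<^sub>v ?xi (t - 1) + ?z)"
      using xc[of "Suc t"] iotac by simp
    fix i assume "i < dim_vec (?A1 *\<^sub>v ?xi t + ?B1 *\<^sub>v ?xi (t - 1) + ?z)"
    then have i: "i < ?N" using iotac by simp
    define p where "p = i mod dy"
    define q where "q = i div dy"
    have pq: "p < dy" "q < n" unfolding p_def q_def using i dy0 by (auto simp: less_mult_imp_div_less mult.commute)
    have xi_e: "\<And>s. ?xi s $ i = ?x * ?Pm s $$ (p, q) - Y $$ (p, q)"
    proof -
      fix s
      have "?xi s $ i = (outp d m dy L X (W s) - Y) $$ (p, q)"
        unfolding xi_def p_def q_def by (rule vecc_index[OF Ec i])
      also have "\<dots> = ?x * ?Pm s $$ (p, q) - Y $$ (p, q)"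
        unfolding outp_def using carrier_matD[OF Pc[of s]] carrier_matD[OF Y] pq by simp
      finally show "?xi s $ i = ?x * ?Pm s $$ (p, q) - Y $$ (p, q)" .
    qed
    define SG where "SG = (\<Sum>l\<in>{1..<Suc L}. ?Ga l $$ (p, q))"
    define SR where "SR = (\<Sum>l\<in>{1..<Suc L}. ?Rl l $$ (p, q))"
    define SM where "SM = (\<Sum>l\<in>{1..<Suc L}. ?Ml l $$ (p, q))"
    have Ht_e: "(?Ht *\<^sub>v ?xi t) $ i = ?x * SG"
    proof -
      have "(?Ht *\<^sub>v ?xi t) $ i = (?x \<cdot>\<^sub>m msum dy n ?Ga [1..<Suc L]) $$ (p, q)"
        unfolding H_xi p_def q_def by (rule vecc_index[OF smult_carrier_mat[OF GSc] i])
      also have "\<dots> = ?x * msum dy n ?Ga [1..<Suc L] $$ (p, q)" using carrier_matD[OF GSc] pq by simp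
      also have "msum dy n ?Ga [1..<Suc L] $$ (p, q) = SG"
        unfolding SG_def by (rule msum_index_set[OF Gac pq])
      finally show ?thesis .
    qed
    have A1_e: "(?A1 *\<^sub>v ?xi t) $ i = (1 + \<beta>) * ?xi t $ i - \<eta> * (?H0 *\<^sub>v ?xi t) $ i"
      unfolding blockA_mult[OF H0c xc] using xc[of t] H0c i by simp
    have B1_e: "(?B1 *\<^sub>v ?xi (t - 1)) $ i = (- \<beta>) * ?xi (t - 1) $ i"
      unfolding blockB_mult[OF xc] using xc[of "t - 1"] i by simp
    have iota_e: "iota d m dy L X Y \<eta> W t $ i = \<eta> * ((?H0 *\<^sub>v ?xi t) $ i - (?Ht *\<^sub>v ?xi t) $ i)"
      unfolding iota_def minus_mult_distrib_mat_vec[OF H0c Htc xc] using H0c Htc i by simp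
    have phi_e: "phi d m dy L X Y \<eta> \<beta> W t $ i = ?x * (?Pm (Suc t) $$ (p, q) - ?Pm t $$ (p, q) + \<eta> * SM)"
    proof -
      have "phi d m dy L X Y \<eta> \<beta> W t $ i = (?x \<cdot>\<^sub>m (Phi d m dy L X Y \<eta> \<beta> W t * X)) $$ (p, q)"
        unfolding phi_def p_def q_def by (rule vecc_index[OF smult_carrier_mat[OF PhiXc] i])
      also have "\<dots> = ?x * (Phi d m dy L X Y \<eta> \<beta> W t * X) $$ (p, q)" using carrier_matD[OF PhiXc] pq by simp
      also have "(Phi d m dy L X Y \<eta> \<beta> W t * X) $$ (p, q) = ?Pm (Suc t) $$ (p, q) - ?Pm t $$ (p, q) + \<eta> * msum dy n ?Ml [1..<Suc L] $$ (p, q)"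
        unfolding PhiX using carrier_matD[OF MSc] carrier_matD[OF Pc[of t]] carrier_matD[OF Pc[of "Suc t"]] pq by simp
      also have "msum dy n ?Ml [1..<Suc L] $$ (p, q) = SM"
        unfolding SM_def by (rule msum_index_set[OF Mlc pq])
      finally show ?thesis .
    qed
    have psi_e: "psi d m dy L X \<beta> W t $ i = ?x * (real (L - 1) * \<beta> * ?Pm t $$ (p, q) + \<beta> * ?Pm (t - 1) $$ (p, q) - \<beta> * SR)"
    proof -
      have "psi d m dy L X \<beta> W t $ i = (?x \<cdot>\<^sub>m ?PsiM) $$ (p, q)"
        unfolding psi_eq p_def q_def by (rule vecc_index[OF smult_carrier_mat[OF PsiMc] i])
      also have "\<dots> = ?x * (real (L - 1) * \<beta> * ?Pm t $$ (p, q) + \<beta> * ?Pm (t - 1) $$ (p, q) - \<beta> * msum dy n ?Rl [1..<Suc L] $$ (p, q))"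
        using carrier_matD[OF PsiMc] carrier_matD[OF RSc] carrier_matD[OF Pc[of t]] carrier_matD[OF Pc[of "t - 1"]] pq by simp
      also have "msum dy n ?Rl [1..<Suc L] $$ (p, q) = SR"
        unfolding SR_def by (rule msum_index_set[OF Rlc pq])
      finally show ?thesis .
    qed
    have eM: "\<eta> * SM = \<eta> * SG - \<beta> * real L * ?Pm t $$ (p, q) + \<beta> * SR"
    proof -
      have "\<eta> * SM = (\<Sum>l\<in>{1..<Suc L}. \<eta> * ?Ml l $$ (p, q))" unfolding SM_def by (rule sum_distrib_left)
      also have "\<dots> = (\<Sum>l\<in>{1..<Suc L}. \<eta> * ?Ga l $$ (p, q) - \<beta> * ?Pm t $$ (p, q) + \<beta> * ?Rl l $$ (p, q))"
      proof (rule sum.cong[OF refl])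
        fix l assume l: "l \<in> {1..<Suc L}"
        then have l1: "1 \<le> l" "l \<le> L" by auto
        have "(\<eta> \<cdot>\<^sub>m ?Ml l) $$ (p, q) = (\<eta> \<cdot>\<^sub>m ?Ga l - \<beta> \<cdot>\<^sub>m ?Pm t + \<beta> \<cdot>\<^sub>m ?Rl l) $$ (p, q)"
          using lin_mat[OF l1] by simp
        then show "\<eta> * ?Ml l $$ (p, q) = \<eta> * ?Ga l $$ (p, q) - \<beta> * ?Pm t $$ (p, q) + \<beta> * ?Rl l $$ (p, q)"
          using carrier_matD[OF Mlc[OF l]] carrier_matD[OF Gac[OF l]] carrier_matD[OF Rlc[OF l]] carrier_matD[OF Pc[of t]] pq by simp
      qed
      also have "\<dots> = (\<Sum>l\<in>{1..<Suc L}. \<eta> * ?Ga l $$ (p, q)) - (\<Sum>l\<in>{1..<Suc L}. \<beta> * ?Pm t $$ (p, q))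
          + (\<Sum>l\<in>{1..<Suc L}. \<beta> * ?Rl l $$ (p, q))"
        by (simp only: sum.distrib sum_subtractf)
      also have "(\<Sum>l\<in>{1..<Suc L}. \<eta> * ?Ga l $$ (p, q)) = \<eta> * SG"
        unfolding SG_def by (rule sum_distrib_left[symmetric])
      also have "(\<Sum>l\<in>{1..<Suc L}. \<beta> * ?Rl l $$ (p, q)) = \<beta> * SR"
        unfolding SR_def by (rule sum_distrib_left[symmetric])
      also have "(\<Sum>l\<in>{1..<Suc L}. \<beta> * ?Pm t $$ (p, q)) = \<beta> * real L * ?Pm t $$ (p, q)"
        by simp
      finally show ?thesis .
    qed
    have "(?A1 *\<^sub>v ?xi t + ?B1 *\<^sub>v ?xi (t - 1) + ?z) $ i
        = ((?A1 *\<^sub>v ?xi t) $ i + (?B1 *\<^sub>v ?xi (t - 1)) $ i)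
          + (phi d m dy L X Y \<eta> \<beta> W t $ i + psi d m dy L X \<beta> W t $ i + iota d m dy L X Y \<eta> W t $ i)"
      using A1c B1c xc[of t] xc[of "t - 1"] phic psic iotac i by simp
    also have "\<dots> = ((1 + \<beta>) * (?x * ?Pm t $$ (p, q) - Y $$ (p, q)) - \<eta> * (?H0 *\<^sub>v ?xi t) $ i)
          + (- \<beta>) * (?x * ?Pm (t - 1) $$ (p, q) - Y $$ (p, q))
          + (?x * (?Pm (Suc t) $$ (p, q) - ?Pm t $$ (p, q) + \<eta> * SM)
             + ?x * (real (L - 1) * \<beta> * ?Pm t $$ (p, q) + \<beta> * ?Pm (t - 1) $$ (p, q) - \<beta> * SR)
             + \<eta> * ((?H0 *\<^sub>v ?xi t) $ i - ?x * SG))"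
      unfolding A1_e B1_e phi_e psi_e iota_e Ht_e xi_e by (rule refl)
    also have "\<dots> = ?x * ?Pm (Suc t) $$ (p, q) - Y $$ (p, q)"
      by (rule final_arith[symmetric, OF eM]) (use L1 in \<open>simp add: of_nat_diff\<close>)
    also have "\<dots> = ?xi (Suc t) $ i" by (rule xi_e[symmetric])
    finally show "?xi (Suc t) $ i = (?A1 *\<^sub>v ?xi t + ?B1 *\<^sub>v ?xi (t - 1) + ?z) $ i" by simp
  qed
  show ?thesis unfolding fb sum_eq
    by (rule arg_cong2[where f=append_vec, OF first second])
qed


end


theorem lemma4:
  fixes d m dy L n :: nat and X Y :: "real mat" and \<eta> \<beta> :: real
    and W :: "nat \<Rightarrow> nat \<Rightarrow> real mat"
  assumes "L \<ge> 1" and "d > 0" and "m > 0" and "dy > 0" and "n > 0"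
    and "X \<in> carrier_mat d n" and "Y \<in> carrier_mat dy n"
    and "\<forall>l. 1 \<le> l \<and> l \<le> L \<longrightarrow> W 0 l \<in> carrier_mat (ldim d m dy L l) (ldim d m dy L (l - 1))"
    and "polyak_seq d m dy L X Y \<eta> \<beta> W"
  shows "(\<forall>t. psd (Hmat d m dy L X (W t))) \<and>
         (\<forall>t. xi d m dy L X Y W (Suc t) @\<^sub>v xi d m dy L X Y W t =
           four_block_mat ((1 + \<beta>) \<cdot>\<^sub>m 1\<^sub>m (dy * n) - \<eta> \<cdot>\<^sub>m Hmat d m dy L X (W 0)) (- (\<beta> \<cdot>\<^sub>m 1\<^sub>m (dy * n)))
                          (1\<^sub>m (dy * n)) (0\<^sub>m (dy * n) (dy * n))
             *\<^sub>v (xi d m dy L X Y W t @\<^sub>v xi d m dy L X Y W (t - 1))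
           + ((phi d m dy L X Y \<eta> \<beta> W t + psi d m dy L X \<beta> W t + iota d m dy L X Y \<eta> W t) @\<^sub>v 0\<^sub>v (dy * n)))"
proof (intro conjI allI)
  fix t
  show "psd (Hmat d m dy L X (W t))" by (rule psd_H[OF assms])
next
  fix t
  show "xi d m dy L X Y W (Suc t) @\<^sub>v xi d m dy L X Y W t =
           four_block_mat ((1 + \<beta>) \<cdot>\<^sub>m 1\<^sub>m (dy * n) - \<eta> \<cdot>\<^sub>m Hmat d m dy L X (W 0)) (- (\<beta> \<cdot>\<^sub>m 1\<^sub>m (dy * n)))
                          (1\<^sub>m (dy * n)) (0\<^sub>m (dy * n) (dy * n))
             *\<^sub>v (xi d m dy L X Y W t @\<^sub>v xi d m dy L X Y W (t - 1))
           + ((phi d m dy L X Y \<eta> \<beta> W t + psi d m dy L X \<beta> W t + iota d m dy L X Y \<eta> W t) @\<^sub>v 0\<^sub>v (dy * n))"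
    by (rule main_step[OF assms])
qed

end
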